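(* There is an absolute constant $K$ such that for all positive integers $s$ and all integers $k$ with $0<k<s/2$, $$\sup_{x\in\mathbb{R}}\left|P\left(\frac{X_{s,k}-\mu_k}{\sigma_k}\le x\right)-\Phi(x)\right| \le \frac{12^{3/2}K(s-k)^{5/2}}{(k(s-2k))^{3/2}},$$ where $X_{s,k}$ is the size of a uniformly random $(s,s+1)$-core with exactly $k$ distinct parts, $\mu_k,\sigma_k^2$ are its mean and variance, and $\Phi$ is the standard normal distribution function. Hence the distribution of $(X_{s,k}-\mu_k)/\sigma_k$ tends to the standard normal distribution if $s\to\infty$ and both $ks^{-2/3}\to\infty$ and $(s-2k)s^{-2/3}\to\infty$.
   Context: A partition $\lambda=(\lambda_1\ge\dots\ge\lambda_k>0)$ has size $\sum\lambda_i$ and $k$ parts; it has distinct parts if $\lambda_1>\dots>\lambda_k$. The hook length of a cell in the Ferrers diagram is (cells strictly right in its row) + (cells strictly above in its column) + 1. A partition is an $s$-core if no cell has hook length $s$; an $(s,s+1)$-core is both an $s$-core and an $(s+1)$-core. For $0<k<s/2$ the set of $(s,s+1)$-cores with exactly $k$ distinct parts is finite and nonempty, and $X_{s,k}$ is the size of one chosen uniformly from it. *)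

theory Defs
  imports "HOL-Probability.Probability"
begin

definition is_partition :: "nat list \<Rightarrow> bool" where
  "is_partition lam \<longleftrightarrow> sorted_wrt (\<ge>) lam \<and> (\<forall>p\<in>set lam. 0 < p)"

definition distinct_parts :: "nat list \<Rightarrow> bool" where
  "distinct_parts lam \<longleftrightarrow> is_partition lam \<and> sorted_wrt (>) lam"

definition psize :: "nat list \<Rightarrow> nat" where
  "psize lam = sum_list lam"

definition cells :: "nat list \<Rightarrow> (nat \<times> nat) set" where
  "cells lam = {(i, j). i < length lam \<and> j < lam ! i}"

definition hook :: "nat list \<Rightarrow> nat \<Rightarrow> nat \<Rightarrow> nat" where
  "hook lam i j = (lam ! i - j - 1) + card {i'. i < i' \<and> i' < length lam \<and> j < lam ! i'} + 1"

definition is_core :: "nat \<Rightarrow> nat list \<Rightarrow> bool" where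
  "is_core s lam \<longleftrightarrow> is_partition lam \<and> (\<forall>(i, j)\<in>cells lam. hook lam i j \<noteq> s)"

definition cores_dp :: "nat \<Rightarrow> nat \<Rightarrow> nat list set" where
  "cores_dp s k = {lam. is_core s lam \<and> is_core (s + 1) lam \<and> distinct_parts lam \<and> length lam = k}"

definition mu :: "nat \<Rightarrow> nat \<Rightarrow> real" where
  "mu s k = (\<Sum>lam\<in>cores_dp s k. real (psize lam)) / real (card (cores_dp s k))"

definition var :: "nat \<Rightarrow> nat \<Rightarrow> real" where
  "var s k = (\<Sum>lam\<in>cores_dp s k. (real (psize lam) - mu s k)\<^sup>2) / real (card (cores_dp s k))"

definition sigma :: "nat \<Rightarrow> nat \<Rightarrow> real" where
  "sigma s k = sqrt (var s k)"

definition std_cdf :: "nat \<Rightarrow> nat \<Rightarrow> real \<Rightarrow> real" where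
  "std_cdf s k x = real (card {lam\<in>cores_dp s k. (real (psize lam) - mu s k) / sigma s k \<le> x})
                   / real (card (cores_dp s k))"

definition Phi :: "real \<Rightarrow> real" where
  "Phi x = measure (density lborel std_normal_density) {..x}"

end

theory Submission
  imports Defs "HOL-Real_Asymp.Real_Asymp"
begin

abbreviation "phi \<equiv> std_normal_density"

lemma Phi_cdf: "Phi = cdf std_normal_distribution"
  unfolding Phi_def cdf_def by auto

lemma Phi_le1: "Phi x \<le> 1" and Phi_ge0: "0 \<le> Phi x"
  unfolding Phi_cdf
  using real_dist_normal_dist real_distribution.cdf_bounded_prob 
  apply blast
  using real_dist_normal_dist finite_borel_measure.cdf_nonneg real_distribution.finite_borel_measure_M by blast

lemma Phi_mono: "x \<le> y \<Longrightarrow> Phi x \<le> Phi y"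
  unfolding Phi_cdf
  using real_dist_normal_dist finite_borel_measure.cdf_nondecreasing real_distribution.finite_borel_measure_M by blast

lemma Phi_top: "(Phi \<longlongrightarrow> 1) at_top" unfolding Phi_cdf
  using real_dist_normal_dist real_distribution.cdf_lim_at_top_prob by blast
lemma Phi_bot: "(Phi \<longlongrightarrow> 0) at_bot" unfolding Phi_cdf
  using real_dist_normal_dist
  by (metis finite_borel_measure.cdf_lim_at_bot real_distribution.finite_borel_measure_M)

lemma Phi_diff: assumes "a \<le> b" shows "Phi b - Phi a = integral {a..b} phi"
proof -
  have ci: "continuous_on {a..b} phi" unfolding std_normal_density_def
    by (intro continuous_intros) auto
  have hi: "(phi has_integral integral {a..b} phi) {a..b}"
    using integrable_continuous_interval[OF ci] by (simp add: has_integral_integral)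
  have hi2: "(phi has_integral integral {a..b} phi) {a<..b}"
  proof (subst has_integral_spike_set_eq[of "{a<..b}" "{a..b}"])
    show "negligible {x \<in> {a..b} - {a<..b}. phi x \<noteq> 0}"
      by (rule negligible_subset[of "{a}"]) auto
    show "negligible {x \<in> {a<..b} - {a..b}. phi x \<noteq> 0}"
      by (rule negligible_subset[of "{}"]) auto
  qed (use hi in auto)
  have nn: "0 \<le> integral {a..b} phi"
    by (rule integral_nonneg[OF integrable_continuous_interval[OF ci]]) (simp add: normal_density_nonneg)
  have "emeasure std_normal_distribution {a<..b} = (\<integral>\<^sup>+x\<in>{a<..b}. ennreal (phi x) \<partial>lborel)"
    by (subst emeasure_density) auto
  also have "\<dots> = ennreal (integral {a..b} phi)"
    by (rule nn_integral_has_integral_lebesgue'[OF _ hi2]) (simp add: normal_density_nonneg)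
  finally have "measure std_normal_distribution {a<..b} = integral {a..b} phi"
    using nn by (simp add: measure_def)
  moreover have "measure std_normal_distribution {a<..b} = Phi b - Phi a"
    unfolding Phi_cdf
    using real_dist_normal_dist assms
    by (metis finite_borel_measure.cdf_diff_eq less_eq_real_def real_distribution.finite_borel_measure_M
        diff_self greaterThanAtMost_empty measure_empty)
  ultimately show ?thesis by simp
qed

lemma Phi_deriv: "(Phi has_real_derivative phi x) (at x)"
proof -
  have ci: "continuous_on {x-1..x+1} phi" unfolding std_normal_density_def
    by (intro continuous_intros) auto
  have d: "((\<lambda>t. integral {x-1..t} phi) has_real_derivative phi x) (at x within {x-1..x+1})"
    by (rule integral_has_real_derivative[OF ci]) auto
  have d2: "((\<lambda>t. Phi (x-1) + integral {x-1..t} phi) has_real_derivative phi x) (at x within {x-1..x+1})"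
    using DERIV_add[OF DERIV_const d] by simp
  have d3: "(Phi has_real_derivative phi x) (at x within {x-1..x+1})"
    by (rule has_field_derivative_transform_within[OF d2, of 1]) (auto simp: Phi_diff[symmetric] dist_real_def)
  show ?thesis using d3
    by (metis at_within_Icc_at add.commute diff_add_cancel diff_less_eq less_add_same_cancel2 zero_less_one)
qed

lemma phi_pos: "phi x > 0" by (simp add: std_normal_density_def)

lemma phi_deriv: "(phi has_real_derivative (- x * phi x)) (at x)"
  unfolding std_normal_density_def
  by (auto intro!: derivative_eq_intros simp: power2_eq_square field_simps)

lemma phi_over_top: "((\<lambda>t. phi t / t) \<longlongrightarrow> 0) at_top"
  unfolding std_normal_density_def by real_asymp
lemma phi_over_bot: "((\<lambda>t. phi t / t) \<longlongrightarrow> 0) at_bot"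
  unfolding std_normal_density_def by real_asymp

lemma mills_right: assumes "w > 0" shows "w * (1 - Phi w) \<le> phi w"
proof -
  define h where "h t = phi t / t - (1 - Phi t)" for t
  have dh: "(h has_real_derivative (- phi t / t^2)) (at t)" if "t > 0" for t
  proof -
    have "(h has_real_derivative ((- t * phi t) * t - phi t * 1) / (t*t) + phi t) (at t)"
      unfolding h_def using that
      by (auto intro!: derivative_eq_intros phi_deriv Phi_deriv)
    moreover have "((- t * phi t) * t - phi t * 1) / (t*t) + phi t = - phi t / t^2"
      using that by (simp add: field_simps power2_eq_square)
    ultimately show ?thesis by simp
  qed
  have dec: "h t \<le> h w" if "t \<ge> w" for t
  proof (rule DERIV_nonpos_imp_nonincreasing[OF that])
    fix x assume "w \<le> x" "x \<le> t"
    then show "\<exists>y. DERIV h x :> y \<and> y \<le> 0" using assms dh[of x] phi_pos[of x]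
      by (intro exI[of _ "- phi x / x^2"]) auto
  qed
  have lim: "(h \<longlongrightarrow> 0) at_top"
  proof -
    have "((\<lambda>t. phi t / t - (1 - Phi t)) \<longlongrightarrow> 0 - (1 - 1)) at_top"
      by (intro tendsto_intros phi_over_top Phi_top)
    then show ?thesis unfolding h_def by simp
  qed
  have "0 \<le> h w"
    by (rule tendsto_le[OF _ tendsto_const lim]) (auto intro!: eventually_at_top_linorderI[of w] dec)
  then show ?thesis using assms unfolding h_def by (simp add: field_simps)
qed

lemma mills_left: assumes "w < 0" shows "(- w) * Phi w \<le> phi w"
proof -
  define h where "h t = - phi t / t - Phi t" for t
  have dh: "(h has_real_derivative (phi t / t^2)) (at t)" if "t < 0" for t
  proof -
    have "(h has_real_derivative - (((- t * phi t) * t - phi t * 1) / (t*t)) - phi t) (at t)"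
      unfolding h_def using that
      by (auto intro!: derivative_eq_intros phi_deriv Phi_deriv)
    moreover have "- (((- t * phi t) * t - phi t * 1) / (t*t)) - phi t = phi t / t^2"
      using that by (simp add: field_simps power2_eq_square)
    ultimately show ?thesis by simp
  qed
  have inc: "h t \<le> h w" if "t \<le> w" for t
  proof (rule DERIV_nonneg_imp_nondecreasing[OF that])
    fix x assume "t \<le> x" "x \<le> w"
    then show "\<exists>y. DERIV h x :> y \<and> y \<ge> 0" using assms dh[of x] phi_pos[of x]
      by (intro exI[of _ "phi x / x^2"]) auto
  qed
  have lim: "(h \<longlongrightarrow> 0) at_bot"
  proof -
    have "((\<lambda>t. - (phi t / t) - Phi t) \<longlongrightarrow> - 0 - 0) at_bot"
      by (intro tendsto_intros phi_over_bot Phi_bot)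
    then show ?thesis unfolding h_def by simp
  qed
  have "0 \<le> h w"
    by (rule tendsto_le[OF _ tendsto_const lim]) (auto intro!: eventually_at_bot_linorderI[of w] inc)
  then show ?thesis using assms unfolding h_def by (simp add: field_simps)
qed

definition stf :: "real \<Rightarrow> real \<Rightarrow> real" where
  "stf z w = (min (Phi w) (Phi z) - Phi w * Phi z) / phi w"

definition stg :: "real \<Rightarrow> real \<Rightarrow> real" where
  "stg z w = w * stf z w + (if w \<le> z then 1 else 0) - Phi z"

lemma Phi_cont: "continuous_on S Phi"
  using Phi_deriv by (meson DERIV_isCont continuous_at_imp_continuous_on)

lemma phi_cont: "continuous_on S phi"
  unfolding std_normal_density_def by (intro continuous_intros) auto

lemma stf_num_nonneg: "0 \<le> min (Phi w) (Phi z) - Phi w * Phi z"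
proof -
  have "Phi w * Phi z \<le> Phi w" "Phi w * Phi z \<le> Phi z"
    using Phi_le1[of w] Phi_le1[of z] Phi_ge0[of w] Phi_ge0[of z]
    by (auto simp: mult_right_le_one_le mult_left_le_one_le)
  then show ?thesis by (auto simp: min_def)
qed

lemma stf_nonneg: "0 \<le> stf z w"
  unfolding stf_def using stf_num_nonneg phi_pos[of w] by simp

lemma stf_num_abs: "\<bar>w\<bar> * (min (Phi w) (Phi z) - Phi w * Phi z) \<le> phi w"
proof -
  have a: "0 \<le> Phi w" "Phi w \<le> 1" "0 \<le> Phi z" "Phi z \<le> 1"
    using Phi_le1 Phi_ge0 by auto
  show ?thesis
  proof (cases "w \<le> z")
    case True
    then have m: "Phi w \<le> Phi z" by (rule Phi_mono)
    then have num: "min (Phi w) (Phi z) - Phi w * Phi z = Phi w * (1 - Phi z)"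
      by (simp add: min_def algebra_simps)
    show ?thesis
    proof (cases "w > 0")
      case True
      have "\<bar>w\<bar> * (Phi w * (1 - Phi z)) \<le> w * (1 - Phi z)"
        using True a by (simp add: mult_left_le_one_le mult_left_mono)
      also have "\<dots> \<le> w * (1 - Phi w)" using True m by simp
      also have "\<dots> \<le> phi w" using mills_right[OF True] .
      finally show ?thesis using num by simp
    next
      case False
      show ?thesis
      proof (cases "w = 0")
        case True then show ?thesis using phi_pos[of w] by simp
      next
        case False
        with \<open>\<not> w > 0\<close> have w: "w < 0" by simp
        have "\<bar>w\<bar> * (Phi w * (1 - Phi z)) \<le> (- w) * Phi w"
          using w a by (simp add: mult_left_le_one_le mult_left_mono mult_right_le_one_le)
        also have "\<dots> \<le> phi w" using mills_left[OF w] .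
        finally show ?thesis using num by simp
      qed
    qed
  next
    case False
    then have m: "Phi z \<le> Phi w" by (intro Phi_mono) simp
    then have num: "min (Phi w) (Phi z) - Phi w * Phi z = Phi z * (1 - Phi w)"
      by (simp add: min_def algebra_simps)
    show ?thesis
    proof (cases "w > 0")
      case True
      have "\<bar>w\<bar> * (Phi z * (1 - Phi w)) \<le> w * (1 - Phi w)"
        using True a by (simp add: mult_left_le_one_le mult_left_mono)
      also have "\<dots> \<le> phi w" using mills_right[OF True] .
      finally show ?thesis using num by simp
    next
      case False
      show ?thesis
      proof (cases "w = 0")
        case True then show ?thesis using phi_pos[of w] by simp
      next
        case False
        with \<open>\<not> w > 0\<close> have w: "w < 0" by simp
        have "Phi z * (1 - Phi w) \<le> Phi z" using a by (simp add: mult_right_le_one_le)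
        then have "Phi z * (1 - Phi w) \<le> Phi w" using m by linarith
        then have "\<bar>w\<bar> * (Phi z * (1 - Phi w)) \<le> (- w) * Phi w"
          using w by (simp add: mult_left_mono)
        also have "\<dots> \<le> phi w" using mills_left[OF w] .
        finally show ?thesis using num by simp
      qed
    qed
  qed
qed

lemma stf_wbound: "\<bar>w * stf z w\<bar> \<le> 1"
proof -
  have "\<bar>w * stf z w\<bar> = \<bar>w\<bar> * (min (Phi w) (Phi z) - Phi w * Phi z) / phi w"
    unfolding stf_def using stf_num_nonneg[of w z] phi_pos[of w] by (simp add: abs_mult)
  also have "\<dots> \<le> 1" using stf_num_abs[of w z] phi_pos[of w] by simp
  finally show ?thesis .
qed

lemma stg_bound: "\<bar>stg z w\<bar> \<le> 2"
  unfolding stg_def using stf_wbound[of w z] Phi_le1[of z] Phi_ge0[of z] by auto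

lemma phi_lower: assumes "\<bar>w\<bar> \<le> 1" shows "phi w \<ge> 1/6"
proof -
  have "w^2 \<le> 1" using assms by (simp add: abs_square_le_1)
  then have e1: "exp (- 1/2) \<le> exp (-(w^2)/2)" by simp
  have "exp (1/2::real) \<le> 1 + 1/2 + (1/2)^2" by (rule exp_bound) auto
  then have "exp (1/2::real) \<le> 2" by (simp add: power2_eq_square)
  then have e2: "1/2 \<le> exp (- 1/2::real)"
    by (simp add: exp_minus field_simps)
  have s3: "sqrt (2*pi) \<le> 3"
  proof -
    have "2*pi \<le> 9" using pi_less_4 by simp
    then have "sqrt (2*pi) \<le> sqrt 9" by (rule real_sqrt_le_mono)
    moreover have "sqrt 9 = (3::real)" by (rule real_sqrt_unique) auto
    ultimately show ?thesis by simp
  qed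
  have "(1/2) / 3 \<le> exp (-(w^2)/2) / sqrt (2*pi)"
  proof (rule frac_le)
    show "1/2 \<le> exp (-(w^2)/2)" using e1 e2 by linarith
  qed (use s3 in auto)
  then show ?thesis unfolding std_normal_density_def by simp
qed

lemma stf_le6: "stf z w \<le> 6"
proof (cases "\<bar>w\<bar> \<le> 1")
  case True
  have n1: "min (Phi w) (Phi z) - Phi w * Phi z \<le> 1"
    using Phi_le1[of w] Phi_ge0[of w] Phi_ge0[of z] by (smt (verit) min.cobounded1 mult_nonneg_nonneg)
  have "stf z w \<le> 1 / (1/6)" unfolding stf_def
    by (rule frac_le) (use n1 phi_lower[OF True] stf_num_nonneg in auto)
  then show ?thesis by simp
next
  case False
  have "stf z w \<le> \<bar>w * stf z w\<bar>" using False stf_nonneg[of z w]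
    by (simp add: abs_mult mult_le_cancel_right1)
  also have "\<dots> \<le> 1" by (rule stf_wbound)
  finally show ?thesis by simp
qed

lemma stf_abs: "\<bar>stf z w\<bar> \<le> 6" using stf_le6 stf_nonneg by (metis abs_of_nonneg)

lemma stf_cont: "continuous_on S (stf z)"
  unfolding stf_def
  by (intro continuous_intros Phi_cont phi_cont) (use phi_pos in \<open>auto simp: less_imp_neq[symmetric]\<close>)

lemma stf_deriv: assumes "w \<noteq> z" shows "(stf z has_real_derivative stg z w) (at w)"
proof (cases "w < z")
  case True
  define h where "h t = Phi t * (1 - Phi z) / phi t" for t
  have "(h has_real_derivative (phi w * (1 - Phi z) * phi w - Phi w * (1 - Phi z) * (- w * phi w)) / (phi w * phi w)) (at w)"
    unfolding h_def using phi_pos[of w]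
    by (auto intro!: derivative_eq_intros Phi_deriv phi_deriv simp: less_imp_neq[symmetric])
  moreover have "(phi w * (1 - Phi z) * phi w - Phi w * (1 - Phi z) * (- w * phi w)) / (phi w * phi w) = stg z w"
    unfolding stg_def stf_def using True Phi_mono[of w z] phi_pos[of w]
    by (simp add: min_def field_simps)
  ultimately have d: "(h has_real_derivative stg z w) (at w)" by simp
  show ?thesis
  proof (rule has_field_derivative_transform_within_open[OF d, of "{..<z}"])
    fix x assume "x \<in> {..<z}"
    then show "h x = stf z x" unfolding h_def stf_def using Phi_mono[of x z]
      by (simp add: min_def algebra_simps)
  qed (use True in auto)
next
  case False
  then have wz: "w > z" using assms by simp
  define h where "h t = Phi z * (1 - Phi t) / phi t" for t
  have "(h has_real_derivative (Phi z * (- phi w) * phi w - Phi z * (1 - Phi w) * (- w * phi w)) / (phi w * phi w)) (at w)"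
    unfolding h_def using phi_pos[of w]
    by (auto intro!: derivative_eq_intros Phi_deriv phi_deriv simp: less_imp_neq[symmetric])
  moreover have "(Phi z * (- phi w) * phi w - Phi z * (1 - Phi w) * (- w * phi w)) / (phi w * phi w) = stg z w"
    unfolding stg_def stf_def using wz Phi_mono[of z w] phi_pos[of w]
    by (simp add: min_def field_simps)
  ultimately have d: "(h has_real_derivative stg z w) (at w)" by simp
  show ?thesis
  proof (rule has_field_derivative_transform_within_open[OF d, of "{z<..}"])
    fix x assume "x \<in> {z<..}"
    then show "h x = stf z x" unfolding h_def stf_def using Phi_mono[of z x]
      by (simp add: min_def algebra_simps)
  qed (use wz in auto)
qed

lemma stf_mvt:
  assumes "a < b" "z \<notin> {a<..<b}"
  shows "\<exists>\<xi>. a < \<xi> \<and> \<xi> < b \<and> stf z b - stf z a = (b - a) * stg z \<xi>"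
proof -
  have "\<exists>l \<xi>. a < \<xi> \<and> \<xi> < b \<and> (stf z has_real_derivative l) (at \<xi>) \<and> stf z b - stf z a = (b - a) * l"
  proof (rule MVT[OF assms(1) stf_cont])
    fix x assume "a < x" "x < b"
    then have "x \<noteq> z" using assms(2) by auto
    then show "stf z differentiable (at x)"
      using stf_deriv real_differentiable_def by blast
  qed
  then obtain l \<xi> where x: "a < \<xi>" "\<xi> < b" "(stf z has_real_derivative l) (at \<xi>)" "stf z b - stf z a = (b - a) * l"
    by blast
  have "\<xi> \<noteq> z" using x assms by auto
  then have "l = stg z \<xi>" using DERIV_unique[OF x(3) stf_deriv] by blast
  then show ?thesis using x by blast
qed

lemma stf_lip_aux: assumes "a \<le> b" shows "\<bar>stf z b - stf z a\<bar> \<le> 2 * (b - a)"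
proof -
  have one: "\<bar>stf z y - stf z x\<bar> \<le> 2 * (y - x)" if "x \<le> y" "z \<notin> {x<..<y}" for x y
  proof (cases "x = y")
    case False
    then have "x < y" using that by simp
    from stf_mvt[OF this that(2)] obtain \<xi> where "stf z y - stf z x = (y - x) * stg z \<xi>" by blast
    moreover have "(y - x) * \<bar>stg z \<xi>\<bar> \<le> (y - x) * 2"
      by (rule mult_left_mono) (use stg_bound[of z \<xi>] that(1) in auto)
    ultimately show ?thesis using that(1) by (simp add: abs_mult)
  qed simp
  show ?thesis
  proof (cases "z \<in> {a<..<b}")
    case True
    have "\<bar>stf z b - stf z a\<bar> \<le> \<bar>stf z b - stf z z\<bar> + \<bar>stf z z - stf z a\<bar>" by simp
    also have "\<dots> \<le> 2 * (b - z) + 2 * (z - a)" using True by (intro add_mono one) auto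
    finally show ?thesis by simp
  qed (use one assms in auto)
qed

lemma stf_lip: "\<bar>stf z b - stf z a\<bar> \<le> 2 * \<bar>b - a\<bar>"
  using stf_lip_aux[of a b z] stf_lip_aux[of b a z] by (cases "a \<le> b") (auto simp: abs_minus_commute)

lemma stein_pointwise:
  "\<bar>d^2 * stg z w - d * (stf z (w + d) - stf z w)\<bar>
     \<le> 4 * d^2 * (if \<bar>w - z\<bar> \<le> \<bar>d\<bar> then 1 else 0) + \<bar>d\<bar>^3 * (6 + 2 * \<bar>w\<bar>)"
proof (cases "\<bar>w - z\<bar> \<le> \<bar>d\<bar>")
  case True
  have "\<bar>d^2 * stg z w - d * (stf z (w + d) - stf z w)\<bar> \<le> \<bar>d^2 * stg z w\<bar> + \<bar>d * (stf z (w + d) - stf z w)\<bar>"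
    by (rule abs_triangle_ineq4)
  also have "\<bar>d^2 * stg z w\<bar> \<le> d^2 * 2" using stg_bound[of z w] by (simp add: abs_mult mult_left_mono)
  also have "\<bar>d * (stf z (w + d) - stf z w)\<bar> \<le> \<bar>d\<bar> * (2 * \<bar>d\<bar>)"
    using stf_lip[of z "w+d" w] by (simp add: abs_mult mult_left_mono)
  finally have c: "\<bar>d^2 * stg z w - d * (stf z (w + d) - stf z w)\<bar> \<le> 4 * d^2"
    by (simp add: power2_eq_square)
  have nn: "0 \<le> \<bar>d\<bar>^3 * (6 + 2 * \<bar>w\<bar>)" by simp
  have e: "(if \<bar>w - z\<bar> \<le> \<bar>d\<bar> then 1 else 0) = (1::real)" using True by simp
  show ?thesis unfolding e by (rule order_trans[OF c]) (simp add: nn)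
next
  case False
  have key: "\<exists>\<xi>. \<bar>\<xi> - w\<bar> \<le> \<bar>d\<bar> \<and> (\<xi> \<le> z \<longleftrightarrow> w \<le> z) \<and> stf z (w + d) - stf z w = d * stg z \<xi>"
  proof (cases d "0::real" rule: linorder_cases)
    case less
    have "z \<notin> {w+d<..<w}" using False less by auto
    from stf_mvt[OF _ this] less obtain \<xi> where x: "w + d < \<xi>" "\<xi> < w" "stf z w - stf z (w+d) = (w - (w+d)) * stg z \<xi>"
      by auto
    show ?thesis using x False less by (intro exI[of _ \<xi>]) (auto simp: algebra_simps)
  next
    case equal then show ?thesis by (intro exI[of _ w]) auto
  next
    case greater
    have "z \<notin> {w<..<w+d}" using False greater by auto
    from stf_mvt[OF _ this] greater obtain \<xi> where x: "w < \<xi>" "\<xi> < w + d" "stf z (w+d) - stf z w = ((w+d) - w) * stg z \<xi>"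
      by auto
    show ?thesis using x False greater by (intro exI[of _ \<xi>]) (auto simp: algebra_simps)
  qed
  then obtain \<xi> where x: "\<bar>\<xi> - w\<bar> \<le> \<bar>d\<bar>" "(\<xi> \<le> z \<longleftrightarrow> w \<le> z)" "stf z (w + d) - stf z w = d * stg z \<xi>"
    by blast
  have "d^2 * stg z w - d * (stf z (w + d) - stf z w) = d^2 * (w * stf z w - \<xi> * stf z \<xi>)"
    unfolding x(3) stg_def using x(2) by (simp add: power2_eq_square algebra_simps)
  also have "w * stf z w - \<xi> * stf z \<xi> = (w - \<xi>) * stf z \<xi> + w * (stf z w - stf z \<xi>)"
    by (simp add: algebra_simps)
  finally have eq: "d^2 * stg z w - d * (stf z (w + d) - stf z w) = d^2 * ((w - \<xi>) * stf z \<xi> + w * (stf z w - stf z \<xi>))" .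
  have "\<bar>(w - \<xi>) * stf z \<xi> + w * (stf z w - stf z \<xi>)\<bar> \<le> \<bar>d\<bar> * 6 + \<bar>w\<bar> * (2 * \<bar>d\<bar>)"
  proof -
    have "\<bar>(w - \<xi>) * stf z \<xi>\<bar> \<le> \<bar>d\<bar> * 6"
      using x(1) stf_abs[of z \<xi>] by (simp add: abs_mult abs_minus_commute mult_mono)
    moreover have "\<bar>w * (stf z w - stf z \<xi>)\<bar> \<le> \<bar>w\<bar> * (2 * \<bar>d\<bar>)"
      using stf_lip[of z w \<xi>] x(1) by (simp add: abs_mult abs_minus_commute mult_left_mono)
    ultimately show ?thesis by (smt (verit))
  qed
  then have "\<bar>d^2 * stg z w - d * (stf z (w + d) - stf z w)\<bar> \<le> d^2 * (\<bar>d\<bar> * 6 + \<bar>w\<bar> * (2 * \<bar>d\<bar>))"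
    unfolding eq by (simp add: abs_mult mult_left_mono)
  also have "\<dots> = \<bar>d\<bar>^3 * (6 + 2 * \<bar>w\<bar>)"
    by (simp add: power2_eq_square power3_eq_cube algebra_simps)
  finally show ?thesis using False by simp
qed

locale stein_pair =
  fixes K :: "'a set" and T :: "'a \<Rightarrow> 'b set" and sw :: "'a \<times> 'b \<Rightarrow> 'a \<times> 'b"
    and W :: "'a \<Rightarrow> real" and P :: nat and lam del :: real
  assumes finK: "finite K" and neK: "K \<noteq> {}"
    and finT: "\<And>A. A \<in> K \<Longrightarrow> finite (T A)"
    and cardT: "\<And>A. A \<in> K \<Longrightarrow> card (T A) = P"
    and Ppos: "P > 0"
    and sw_in: "\<And>x. x \<in> Sigma K T \<Longrightarrow> sw x \<in> Sigma K T"
    and sw_inv: "\<And>x. x \<in> Sigma K T \<Longrightarrow> sw (sw x) = x"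
    and lam_pos: "lam > 0"
    and Dbound: "\<And>x. x \<in> Sigma K T \<Longrightarrow> \<bar>W (fst (sw x)) - W (fst x)\<bar> \<le> del"
    and lin: "\<And>A. A \<in> K \<Longrightarrow> (\<Sum>t\<in>T A. W (fst (sw (A, t))) - W A) = - lam * real P * W A"
    and var1: "(\<Sum>A\<in>K. (W A)^2) = real (card K)"
begin

definition D where "D x = W (fst (sw x)) - W (fst x)"
definition B where "B A = (\<Sum>t\<in>T A. (D (A, t))^2) / (2 * lam * real P)"

abbreviation "X \<equiv> Sigma K T"

lemma finX: "finite X" using finK finT by (rule finite_SigmaI)

lemma sumX: "(\<Sum>x\<in>X. f x) = (\<Sum>A\<in>K. \<Sum>t\<in>T A. f (A, t))"
  using finK finT by (subst sum.Sigma) auto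

lemma sw_bij: "bij_betw sw X X"
proof (rule bij_betw_byWitness[where f'=sw])
  show "\<forall>a\<in>X. sw (sw a) = a" using sw_inv by blast
  show "\<forall>a'\<in>X. sw (sw a') = a'" using sw_inv by blast
  show "sw ` X \<subseteq> X" using sw_in by blast
  show "sw ` X \<subseteq> X" using sw_in by blast
qed

lemma reindex: "(\<Sum>x\<in>X. f x) = (\<Sum>x\<in>X. f (sw x))"
  using sum.reindex_bij_betw[OF sw_bij, of f] by simp

lemma D_sw: "x \<in> X \<Longrightarrow> D (sw x) = - D x"
  unfolding D_def using sw_inv by simp

lemma antisym: "(\<Sum>x\<in>X. D x * (h (W (fst (sw x))) + h (W (fst x)))) = 0"
proof -
  let ?S = "\<Sum>x\<in>X. D x * (h (W (fst (sw x))) + h (W (fst x)))"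
  have "?S = (\<Sum>x\<in>X. D (sw x) * (h (W (fst (sw (sw x)))) + h (W (fst (sw x)))))"
    by (rule reindex)
  also have "\<dots> = (\<Sum>x\<in>X. - (D x * (h (W (fst (sw x))) + h (W (fst x)))))"
    by (rule sum.cong) (auto simp: D_sw sw_inv algebra_simps)
  also have "\<dots> = - ?S" by (simp add: sum_negf)
  finally show ?thesis by simp
qed

lemma ident: "(\<Sum>x\<in>X. D x * (h (W (fst x) + D x) - h (W (fst x)))) = 2 * lam * real P * (\<Sum>A\<in>K. W A * h (W A))"
proof -
  have e: "W (fst x) + D x = W (fst (sw x))" for x unfolding D_def by simp
  have "(\<Sum>x\<in>X. D x * (h (W (fst x) + D x) - h (W (fst x))))
      = (\<Sum>x\<in>X. D x * (h (W (fst (sw x))) + h (W (fst x)))) - 2 * (\<Sum>x\<in>X. D x * h (W (fst x)))"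
    unfolding e by (simp add: sum_subtractf sum_distrib_left algebra_simps sum.distrib)
  also have "\<dots> = - 2 * (\<Sum>x\<in>X. D x * h (W (fst x)))" by (simp add: antisym)
  also have "(\<Sum>x\<in>X. D x * h (W (fst x))) = (\<Sum>A\<in>K. h (W A) * (\<Sum>t\<in>T A. D (A, t)))"
    by (simp add: sumX sum_distrib_left mult.commute)
  also have "\<dots> = (\<Sum>A\<in>K. h (W A) * (- lam * real P * W A))"
    by (rule sum.cong) (auto simp: D_def lin)
  also have "- 2 * \<dots> = 2 * lam * real P * (\<Sum>A\<in>K. W A * h (W A))"
    by (simp add: sum_distrib_left sum_negf algebra_simps)
  finally show ?thesis .
qed

lemma Ppos': "real P > 0" using Ppos by simp

lemma sumB: "(\<Sum>A\<in>K. B A) = real (card K)"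
proof -
  have "(\<Sum>x\<in>X. D x * ((W (fst x) + D x) - W (fst x))) = 2 * lam * real P * (\<Sum>A\<in>K. W A * W A)"
    using ident[of "\<lambda>w. w"] by simp
  then have "(\<Sum>x\<in>X. (D x)^2) = 2 * lam * real P * real (card K)"
    using var1 by (simp add: power2_eq_square)
  then have "(\<Sum>A\<in>K. \<Sum>t\<in>T A. (D (A, t))^2) = 2 * lam * real P * real (card K)"
    by (simp add: sumX)
  then show ?thesis unfolding B_def using lam_pos Ppos'
    by (simp add: sum_divide_distrib[symmetric])
qed

lemma sum_absW: "(\<Sum>A\<in>K. \<bar>W A\<bar>) \<le> real (card K)"
proof -
  have "(\<Sum>A\<in>K. \<bar>W A\<bar>) \<le> (\<Sum>A\<in>K. (1 + (W A)^2) / 2)"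
  proof (rule sum_mono)
    fix A show "\<bar>W A\<bar> \<le> (1 + (W A)^2) / 2"
      using sum_squares_ge_zero[of "\<bar>W A\<bar> - 1" 0] by (simp add: power2_eq_square algebra_simps)
  qed
  also have "\<dots> = (real (card K) + real (card K)) / 2"
    by (simp add: sum_divide_distrib[symmetric] sum.distrib var1)
  finally show ?thesis by simp
qed

lemma del_nonneg: "0 \<le> del"
proof -
  obtain A where A: "A \<in> K" using neK by blast
  then have "T A \<noteq> {}" using cardT[OF A] Ppos by auto
  then obtain t where "t \<in> T A" by blast
  then show ?thesis using Dbound[of "(A,t)"] A by auto
qed

lemma conc_pointwise:
  fixes w d z :: real
  assumes "\<bar>d\<bar> \<le> del"
  defines "F \<equiv> \<lambda>u. max (- 2 * del) (min (2 * del) (u - z))"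
  shows "d^2 * (if \<bar>w - z\<bar> \<le> del then 1 else 0) \<le> d * (F (w + d) - F w)"
proof -
  have mono: "0 \<le> d * (F (w + d) - F w)"
  proof (cases "d \<ge> 0")
    case True
    then have "F w \<le> F (w + d)" unfolding F_def by (auto simp: max_def min_def)
    then show ?thesis using True by simp
  next
    case False
    then have "F (w + d) \<le> F w" unfolding F_def by (auto simp: max_def min_def)
    then show ?thesis using False by (simp add: mult_nonpos_nonpos)
  qed
  show ?thesis
  proof (cases "\<bar>w - z\<bar> \<le> del")
    case True
    have "F (w + d) - F w = d" unfolding F_def using True assms(1) by (auto simp: max_def min_def)
    then show ?thesis using True by (simp add: power2_eq_square)
  qed (use mono in simp)
qed

theorem stein_kolmogorov:
  "\<bar>real (card {A\<in>K. W A \<le> z}) / real (card K) - Phi z\<bar>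
     \<le> 2 * (\<Sum>A\<in>K. \<bar>1 - B A\<bar>) / real (card K) + 8 * del + 4 * del^3 / lam"
proof -
  define N where "N = real (card K)"
  have Npos: "N > 0" unfolding N_def using finK neK by (simp add: card_gt_0_iff)
  define c where "c = 2 * lam * real P"
  have cpos: "c > 0" unfolding c_def using lam_pos Ppos' by simp
  define f where "f = stf z"
  define g where "g = stg z"
  define F where "F = (\<lambda>u. max (- 2 * del) (min (2 * del) (u - z)))"
  define E where "E x = (D x)^2 * g (W (fst x)) - D x * (f (W (fst x) + D x) - f (W (fst x)))" for x
  have card_sum: "real (card {A\<in>K. W A \<le> z}) = (\<Sum>A\<in>K. if W A \<le> z then 1 else 0)"
    using finK by (simp add: sum.inter_filter[symmetric])
  have s1: "real (card {A\<in>K. W A \<le> z}) - N * Phi z = (\<Sum>A\<in>K. g (W A) - W A * f (W A))"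
    unfolding card_sum N_def g_def f_def stg_def by (simp add: sum_subtractf)
  have s2: "(\<Sum>A\<in>K. W A * f (W A)) = (\<Sum>x\<in>X. D x * (f (W (fst x) + D x) - f (W (fst x)))) / c"
  proof -
    have i: "(\<Sum>x\<in>X. D x * (f (W (fst x) + D x) - f (W (fst x)))) = c * (\<Sum>A\<in>K. W A * f (W A))"
      unfolding c_def by (rule ident)
    show ?thesis unfolding i using cpos by simp
  qed
  have s3: "(\<Sum>A\<in>K. g (W A) * B A) = (\<Sum>x\<in>X. (D x)^2 * g (W (fst x))) / c"
    unfolding B_def c_def[symmetric]
    by (simp add: sumX sum_divide_distrib sum_distrib_left mult.commute)
  have s4: "real (card {A\<in>K. W A \<le> z}) - N * Phi z = (\<Sum>A\<in>K. g (W A) * (1 - B A)) + (\<Sum>x\<in>X. E x) / c"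
  proof -
    have "(\<Sum>A\<in>K. g (W A) - W A * f (W A)) = (\<Sum>A\<in>K. g (W A) * (1 - B A)) + (\<Sum>A\<in>K. g (W A) * B A) - (\<Sum>A\<in>K. W A * f (W A))"
      by (simp add: sum_subtractf algebra_simps sum.distrib)
    also have "\<dots> = (\<Sum>A\<in>K. g (W A) * (1 - B A)) + (\<Sum>x\<in>X. E x) / c"
      unfolding s2 s3 E_def by (simp add: sum_subtractf diff_divide_distrib)
    finally show ?thesis using s1 by simp
  qed
  have b1: "\<bar>\<Sum>A\<in>K. g (W A) * (1 - B A)\<bar> \<le> 2 * (\<Sum>A\<in>K. \<bar>1 - B A\<bar>)"
  proof -
    have "\<bar>\<Sum>A\<in>K. g (W A) * (1 - B A)\<bar> \<le> (\<Sum>A\<in>K. \<bar>g (W A) * (1 - B A)\<bar>)" by (rule sum_abs)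
    also have "\<dots> \<le> (\<Sum>A\<in>K. 2 * \<bar>1 - B A\<bar>)"
      by (rule sum_mono) (use stg_bound in \<open>auto simp: abs_mult g_def intro!: mult_right_mono\<close>)
    finally show ?thesis by (simp add: sum_distrib_left)
  qed
  have pw: "\<bar>E x\<bar> \<le> 4 * (D x)^2 * (if \<bar>W (fst x) - z\<bar> \<le> del then 1 else 0) + del^3 * (6 + 2 * \<bar>W (fst x)\<bar>)"
    if x: "x \<in> X" for x
  proof -
    have dx: "\<bar>D x\<bar> \<le> del" using Dbound[OF x] unfolding D_def .
    have "\<bar>E x\<bar> \<le> 4 * (D x)^2 * (if \<bar>W (fst x) - z\<bar> \<le> \<bar>D x\<bar> then 1 else 0) + \<bar>D x\<bar>^3 * (6 + 2 * \<bar>W (fst x)\<bar>)"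
      unfolding E_def f_def g_def by (rule stein_pointwise)
    also have "\<dots> \<le> 4 * (D x)^2 * (if \<bar>W (fst x) - z\<bar> \<le> del then 1 else 0) + del^3 * (6 + 2 * \<bar>W (fst x)\<bar>)"
    proof (rule add_mono)
      show "4 * (D x)^2 * (if \<bar>W (fst x) - z\<bar> \<le> \<bar>D x\<bar> then 1 else 0) \<le> 4 * (D x)^2 * (if \<bar>W (fst x) - z\<bar> \<le> del then 1 else 0)"
        using dx by auto
      show "\<bar>D x\<bar>^3 * (6 + 2 * \<bar>W (fst x)\<bar>) \<le> del^3 * (6 + 2 * \<bar>W (fst x)\<bar>)"
        by (rule mult_right_mono) (use dx in \<open>auto intro: power_mono\<close>)
    qed
    finally show ?thesis .
  qed
  have conc: "(\<Sum>x\<in>X. (D x)^2 * (if \<bar>W (fst x) - z\<bar> \<le> del then 1 else 0)) \<le> 2 * del * c * N"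
  proof -
    have "(\<Sum>x\<in>X. (D x)^2 * (if \<bar>W (fst x) - z\<bar> \<le> del then 1 else 0)) \<le> (\<Sum>x\<in>X. D x * (F (W (fst x) + D x) - F (W (fst x))))"
    proof (rule sum_mono)
      fix x assume x: "x \<in> X"
      have dx: "\<bar>D x\<bar> \<le> del" using Dbound[OF x] unfolding D_def .
      show "(D x)^2 * (if \<bar>W (fst x) - z\<bar> \<le> del then 1 else 0) \<le> D x * (F (W (fst x) + D x) - F (W (fst x)))"
        unfolding F_def by (rule conc_pointwise[OF dx])
    qed
    also have "\<dots> = c * (\<Sum>A\<in>K. W A * F (W A))" unfolding c_def by (rule ident)
    also have "\<dots> \<le> c * (\<Sum>A\<in>K. \<bar>W A\<bar> * (2 * del))"
    proof (rule mult_left_mono[OF sum_mono])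
      fix A
      have "\<bar>F (W A)\<bar> \<le> 2 * del" unfolding F_def using del_nonneg by auto
      then have "\<bar>W A * F (W A)\<bar> \<le> \<bar>W A\<bar> * (2 * del)" by (simp add: abs_mult mult_left_mono)
      then show "W A * F (W A) \<le> \<bar>W A\<bar> * (2 * del)" by simp
    qed (use cpos in simp)
    also have "\<dots> = 2 * del * c * (\<Sum>A\<in>K. \<bar>W A\<bar>)"
      by (simp add: sum_distrib_left sum_distrib_right mult.assoc mult.left_commute mult.commute)
    also have "\<dots> \<le> 2 * del * c * N"
      unfolding N_def by (rule mult_left_mono[OF sum_absW]) (use del_nonneg cpos in simp)
    finally show ?thesis .
  qed
  have sumW6: "(\<Sum>x\<in>X. del^3 * (6 + 2 * \<bar>W (fst x)\<bar>)) \<le> del^3 * real P * 8 * N"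
  proof -
    have "(\<Sum>x\<in>X. del^3 * (6 + 2 * \<bar>W (fst x)\<bar>)) = (\<Sum>A\<in>K. real P * (del^3 * (6 + 2 * \<bar>W A\<bar>)))"
      by (simp add: sumX cardT)
    also have "\<dots> = del^3 * real P * (6 * N + 2 * (\<Sum>A\<in>K. \<bar>W A\<bar>))"
      by (simp add: sum_distrib_left sum.distrib N_def algebra_simps)
    also have "\<dots> \<le> del^3 * real P * (6 * N + 2 * N)"
      using sum_absW del_nonneg unfolding N_def by (intro mult_left_mono) auto
    finally show ?thesis by simp
  qed
  have b2: "\<bar>\<Sum>x\<in>X. E x\<bar> \<le> 8 * del * c * N + del^3 * real P * 8 * N"
  proof -
    have "\<bar>\<Sum>x\<in>X. E x\<bar> \<le> (\<Sum>x\<in>X. \<bar>E x\<bar>)" by (rule sum_abs)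
    also have "\<dots> \<le> (\<Sum>x\<in>X. 4 * ((D x)^2 * (if \<bar>W (fst x) - z\<bar> \<le> del then 1 else 0)) + del^3 * (6 + 2 * \<bar>W (fst x)\<bar>))"
    proof (rule sum_mono)
      fix x assume "x \<in> X"
      from pw[OF this] show "\<bar>E x\<bar> \<le> 4 * ((D x)^2 * (if \<bar>W (fst x) - z\<bar> \<le> del then 1 else 0)) + del^3 * (6 + 2 * \<bar>W (fst x)\<bar>)"
        by (simp only: mult.assoc)
    qed
    also have "\<dots> = 4 * (\<Sum>x\<in>X. (D x)^2 * (if \<bar>W (fst x) - z\<bar> \<le> del then 1 else 0)) + (\<Sum>x\<in>X. del^3 * (6 + 2 * \<bar>W (fst x)\<bar>))"
      by (simp add: sum.distrib sum_distrib_left)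
    also have "\<dots> \<le> 4 * (2 * del * c * N) + del^3 * real P * 8 * N"
      using conc sumW6 by linarith
    finally show ?thesis by simp
  qed
  have "\<bar>real (card {A\<in>K. W A \<le> z}) - N * Phi z\<bar> \<le> 2 * (\<Sum>A\<in>K. \<bar>1 - B A\<bar>) + (8 * del * c * N + del^3 * real P * 8 * N) / c"
  proof -
    have "\<bar>(\<Sum>x\<in>X. E x) / c\<bar> \<le> (8 * del * c * N + del^3 * real P * 8 * N) / c"
      using b2 cpos by (simp add: divide_right_mono)
    then show ?thesis unfolding s4 using b1 by linarith
  qed
  also have "(8 * del * c * N + del^3 * real P * 8 * N) / c = N * (8 * del + 4 * del^3 / lam)"
    using cpos lam_pos Ppos' unfolding c_def by (simp add: field_simps)
  finally have main: "\<bar>real (card {A\<in>K. W A \<le> z}) - N * Phi z\<bar> \<le> 2 * (\<Sum>A\<in>K. \<bar>1 - B A\<bar>) + N * (8 * del + 4 * del^3 / lam)" .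
  have "\<bar>real (card {A\<in>K. W A \<le> z}) / N - Phi z\<bar> = \<bar>real (card {A\<in>K. W A \<le> z}) - N * Phi z\<bar> / N"
    using Npos by (simp add: field_simps)
  also have "\<dots> \<le> (2 * (\<Sum>A\<in>K. \<bar>1 - B A\<bar>) + N * (8 * del + 4 * del^3 / lam)) / N"
    using main Npos by (simp add: divide_right_mono)
  also have "\<dots> = 2 * (\<Sum>A\<in>K. \<bar>1 - B A\<bar>) / N + 8 * del + 4 * del^3 / lam"
    using Npos by (simp add: field_simps)
  finally show ?thesis unfolding N_def .
qed

end

definition KS :: "'a set \<Rightarrow> nat \<Rightarrow> 'a set set" where
  "KS U k = {A. A \<subseteq> U \<and> card A = k}"

lemma KS_finite: "finite U \<Longrightarrow> finite (KS U k)"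
  unfolding KS_def by (rule finite_subset[of _ "Pow U"]) auto

lemma KS_card: "finite U \<Longrightarrow> card (KS U k) = card U choose k"
  unfolding KS_def by (rule n_subsets)

lemma cnt1:
  assumes U: "finite U" and a: "a \<in> U" and k: "k \<ge> 1"
  shows "card {A \<in> KS U k. a \<in> A} = (card U - 1) choose (k - 1)"
proof -
  have "bij_betw (insert a) (KS (U - {a}) (k - 1)) {A \<in> KS U k. a \<in> A}"
  proof (rule bij_betw_byWitness[where f' = "\<lambda>A. A - {a}"])
    show "\<forall>B\<in>KS (U - {a}) (k - 1). insert a B - {a} = B" unfolding KS_def by auto
    show "\<forall>A\<in>{A \<in> KS U k. a \<in> A}. insert a (A - {a}) = A" by auto
    show "insert a ` KS (U - {a}) (k - 1) \<subseteq> {A \<in> KS U k. a \<in> A}"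
    proof
      fix A assume "A \<in> insert a ` KS (U - {a}) (k - 1)"
      then obtain B where B: "B \<subseteq> U - {a}" "card B = k - 1" "A = insert a B" unfolding KS_def by auto
      have "finite B" using B(1) U finite_subset by blast
      then have "card A = k" using B k by (auto simp: card_insert_if)
      then show "A \<in> {A \<in> KS U k. a \<in> A}" using B a unfolding KS_def by auto
    qed
    show "(\<lambda>A. A - {a}) ` {A \<in> KS U k. a \<in> A} \<subseteq> KS (U - {a}) (k - 1)"
    proof
      fix B assume "B \<in> (\<lambda>A. A - {a}) ` {A \<in> KS U k. a \<in> A}"
      then obtain A where A: "A \<subseteq> U" "card A = k" "a \<in> A" "B = A - {a}" unfolding KS_def by auto
      have "finite A" using A(1) U finite_subset by blast
      then show "B \<in> KS (U - {a}) (k - 1)" using A unfolding KS_def by auto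
    qed
  qed
  then have "card {A \<in> KS U k. a \<in> A} = card (KS (U - {a}) (k - 1))"
    by (simp add: bij_betw_same_card)
  also have "\<dots> = (card U - 1) choose (k - 1)" using U a by (simp add: KS_card)
  finally show ?thesis .
qed

lemma cnt2:
  assumes U: "finite U" and a: "a \<in> U" and b: "b \<in> U" and ab: "a \<noteq> b" and k: "k \<ge> 2"
  shows "card {A \<in> KS U k. a \<in> A \<and> b \<in> A} = (card U - 2) choose (k - 2)"
proof -
  have "bij_betw (\<lambda>B. insert a (insert b B)) (KS (U - {a, b}) (k - 2)) {A \<in> KS U k. a \<in> A \<and> b \<in> A}"
  proof (rule bij_betw_byWitness[where f' = "\<lambda>A. A - {a, b}"])
    show "\<forall>B\<in>KS (U - {a, b}) (k - 2). insert a (insert b B) - {a, b} = B" unfolding KS_def by auto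
    show "\<forall>A\<in>{A \<in> KS U k. a \<in> A \<and> b \<in> A}. insert a (insert b (A - {a, b})) = A" by auto
    show "(\<lambda>B. insert a (insert b B)) ` KS (U - {a, b}) (k - 2) \<subseteq> {A \<in> KS U k. a \<in> A \<and> b \<in> A}"
    proof
      fix A assume "A \<in> (\<lambda>B. insert a (insert b B)) ` KS (U - {a, b}) (k - 2)"
      then obtain B where B: "B \<subseteq> U - {a, b}" "card B = k - 2" "A = insert a (insert b B)" unfolding KS_def by auto
      have "finite B" using B(1) U finite_subset by blast
      then have "card A = k" using B k ab by (auto simp: card_insert_if)
      then show "A \<in> {A \<in> KS U k. a \<in> A \<and> b \<in> A}" using B a b unfolding KS_def by auto
    qed
    show "(\<lambda>A. A - {a, b}) ` {A \<in> KS U k. a \<in> A \<and> b \<in> A} \<subseteq> KS (U - {a, b}) (k - 2)"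
    proof
      fix B assume "B \<in> (\<lambda>A. A - {a, b}) ` {A \<in> KS U k. a \<in> A \<and> b \<in> A}"
      then obtain A where A: "A \<subseteq> U" "card A = k" "a \<in> A" "b \<in> A" "B = A - {a, b}" unfolding KS_def by auto
      have "finite A" using A(1) U finite_subset by blast
      then have "card B = k - 2" using A ab by (simp add: card_Diff_subset)
      then show "B \<in> KS (U - {a, b}) (k - 2)" using A unfolding KS_def by auto
    qed
  qed
  then have "card {A \<in> KS U k. a \<in> A \<and> b \<in> A} = card (KS (U - {a, b}) (k - 2))"
    by (simp add: bij_betw_same_card)
  also have "\<dots> = (card U - 2) choose (k - 2)" using U a b ab by (simp add: KS_card numeral_2_eq_2)
  finally show ?thesis .
qed

lemma cnt1_real:
  assumes U: "finite U" and a: "a \<in> U" and k: "k \<ge> 1"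
  shows "real (card {A \<in> KS U k. a \<in> A}) = real k * real (card (KS U k)) / real (card U)"
proof -
  have n: "card U > 0" using U a card_gt_0_iff by blast
  have "k * (card U choose k) = card U * ((card U - 1) choose (k - 1))"
    using k by (intro times_binomial_minus1_eq) simp
  then have "real k * real (card U choose k) = real (card U) * real ((card U - 1) choose (k - 1))"
    by (metis of_nat_mult)
  then show ?thesis using n by (simp add: cnt1[OF U a k] KS_card[OF U] field_simps)
qed

lemma cnt2_real:
  assumes U: "finite U" and a: "a \<in> U" and b: "b \<in> U" and ab: "a \<noteq> b" and k: "k \<ge> 1"
  shows "real (card {A \<in> KS U k. a \<in> A \<and> b \<in> A})
       = real k * (real k - 1) * real (card (KS U k)) / (real (card U) * (real (card U) - 1))"
proof (cases "k = 1")
  case True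
  have e: "{A \<in> KS U k. a \<in> A \<and> b \<in> A} = {}"
  proof (rule ccontr)
    assume "{A \<in> KS U k. a \<in> A \<and> b \<in> A} \<noteq> {}"
    then obtain A where "card A = 1" "a \<in> A" "b \<in> A" using True unfolding KS_def by auto
    then show False using ab by (auto simp: card_Suc_eq)
  qed
  show ?thesis unfolding e using True by simp
next
  case False
  then have k2: "k \<ge> 2" using k by simp
  have "{a, b} \<subseteq> U" using a b by auto
  then have "card {a, b} \<le> card U" using U by (intro card_mono)
  then have n2: "card U \<ge> 2" using ab by simp
  have e1: "k * (card U choose k) = card U * ((card U - 1) choose (k - 1))"
    using k by (intro times_binomial_minus1_eq) simp
  have e2: "(k - 1) * ((card U - 1) choose (k - 1)) = (card U - 1) * ((card U - 1 - 1) choose (k - 1 - 1))"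
    using k2 by (intro times_binomial_minus1_eq) simp
  have "real k * real (card U choose k) = real (card U) * real ((card U - 1) choose (k - 1))"
    using e1 by (metis of_nat_mult)
  moreover have "(real k - 1) * real ((card U - 1) choose (k - 1)) = (real (card U) - 1) * real ((card U - 2) choose (k - 2))"
    using e2 k2 n2 by (metis (no_types, lifting) diff_diff_left of_nat_1 of_nat_diff of_nat_mult one_add_one le_trans one_le_numeral)
  ultimately have eqn: "real k * (real k - 1) * real (card U choose k) = real (card U) * (real (card U) - 1) * real ((card U - 2) choose (k - 2))"
    by (metis mult.assoc mult.left_commute)
  have pos: "real (card U) * (real (card U) - 1) > 0" using n2 by simp
  have "real ((card U - 2) choose (k - 2)) = real k * (real k - 1) * real (card U choose k) / (real (card U) * (real (card U) - 1))"
    by (subst eq_divide_eq) (use pos eqn in \<open>auto simp: mult_ac\<close>)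
  then show ?thesis by (simp add: cnt2[OF U a b ab k2] KS_card[OF U])
qed

lemma sum_subset_if: "finite U \<Longrightarrow> A \<subseteq> U \<Longrightarrow> (\<Sum>a\<in>A. f a) = (\<Sum>a\<in>U. if a \<in> A then f a else 0)"
  by (simp add: sum.inter_filter[symmetric] Int_absorb1 Collect_mem_eq inf.absorb2 Int_def[symmetric])

lemma moment1:
  assumes U: "finite U" and k: "k \<ge> 1"
  shows "(\<Sum>A\<in>KS U k. \<Sum>a\<in>A. g a) = real k * real (card (KS U k)) / real (card U) * (\<Sum>a\<in>U. g a)"
proof -
  have "(\<Sum>A\<in>KS U k. \<Sum>a\<in>A. g a) = (\<Sum>A\<in>KS U k. \<Sum>a\<in>U. if a \<in> A then g a else 0)"
    by (rule sum.cong) (use U in \<open>auto simp: KS_def intro: sum_subset_if\<close>)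
  also have "\<dots> = (\<Sum>a\<in>U. \<Sum>A\<in>KS U k. if a \<in> A then g a else 0)" by (rule sum.swap)
  also have "\<dots> = (\<Sum>a\<in>U. g a * real (card {A \<in> KS U k. a \<in> A}))"
    by (rule sum.cong) (use KS_finite[OF U] in \<open>auto simp: sum.inter_filter[symmetric]\<close>)
  also have "\<dots> = (\<Sum>a\<in>U. g a * (real k * real (card (KS U k)) / real (card U)))"
    by (rule sum.cong) (auto simp: cnt1_real[OF U _ k])
  also have "\<dots> = (\<Sum>a\<in>U. g a) * (real k * real (card (KS U k)) / real (card U))"
    by (simp only: sum_distrib_right[symmetric])
  finally show ?thesis by (metis mult.commute)
qed

lemma moment2:
  assumes U: "finite U" and k: "k \<ge> 1"
  defines "N \<equiv> real (card (KS U k))" and "n \<equiv> real (card U)"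
  shows "(\<Sum>A\<in>KS U k. (\<Sum>a\<in>A. g a)^2)
       = N * (real k / n * (\<Sum>a\<in>U. (g a)^2)
              + real k * (real k - 1) / (n * (n - 1)) * ((\<Sum>a\<in>U. g a)^2 - (\<Sum>a\<in>U. (g a)^2)))"
proof -
  define C1 where "C1 = real k * N / n"
  define C2 where "C2 = real k * (real k - 1) * N / (n * (n - 1))"
  have c: "real (card {A \<in> KS U k. a \<in> A \<and> b \<in> A}) = (if a = b then C1 else C2)" if "a \<in> U" "b \<in> U" for a b
  proof (cases "a = b")
    case True then show ?thesis using cnt1_real[OF U that(1) k] unfolding C1_def N_def n_def by simp
  next
    case False then show ?thesis using cnt2_real[OF U that False k] unfolding C2_def N_def n_def by simp
  qed
  have "(\<Sum>A\<in>KS U k. (\<Sum>a\<in>A. g a)^2) = (\<Sum>A\<in>KS U k. \<Sum>a\<in>U. \<Sum>b\<in>U. if a \<in> A \<and> b \<in> A then g a * g b else 0)"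
  proof (rule sum.cong)
    fix A assume "A \<in> KS U k"
    then have AU: "A \<subseteq> U" unfolding KS_def by auto
    have "(\<Sum>a\<in>A. g a)^2 = (\<Sum>a\<in>A. \<Sum>b\<in>A. g a * g b)"
      by (simp add: power2_eq_square sum_product)
    also have "\<dots> = (\<Sum>a\<in>A. \<Sum>b\<in>U. if b \<in> A then g a * g b else 0)"
      by (rule sum.cong[OF refl]) (rule sum_subset_if[OF U AU])
    also have "\<dots> = (\<Sum>a\<in>U. if a \<in> A then (\<Sum>b\<in>U. if b \<in> A then g a * g b else 0) else 0)"
      by (rule sum_subset_if[OF U AU])
    also have "\<dots> = (\<Sum>a\<in>U. \<Sum>b\<in>U. if a \<in> A \<and> b \<in> A then g a * g b else 0)"
      by (rule sum.cong) auto
    finally show "(\<Sum>a\<in>A. g a)^2 = (\<Sum>a\<in>U. \<Sum>b\<in>U. if a \<in> A \<and> b \<in> A then g a * g b else 0)" .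
  qed simp
  also have "\<dots> = (\<Sum>a\<in>U. \<Sum>b\<in>U. \<Sum>A\<in>KS U k. if a \<in> A \<and> b \<in> A then g a * g b else 0)"
    by (simp add: sum.swap[of _ "KS U k"])
  also have "\<dots> = (\<Sum>a\<in>U. \<Sum>b\<in>U. g a * g b * (if a = b then C1 else C2))"
  proof (intro sum.cong refl)
    fix a b assume ab: "a \<in> U" "b \<in> U"
    have "(\<Sum>A\<in>KS U k. if a \<in> A \<and> b \<in> A then g a * g b else 0) = g a * g b * real (card {A \<in> KS U k. a \<in> A \<and> b \<in> A})"
      using KS_finite[OF U] by (simp add: sum.inter_filter[symmetric])
    then show "(\<Sum>A\<in>KS U k. if a \<in> A \<and> b \<in> A then g a * g b else 0) = g a * g b * (if a = b then C1 else C2)"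
      using c[OF ab] by simp
  qed
  also have "\<dots> = (\<Sum>a\<in>U. g a * (C2 * (\<Sum>b\<in>U. g b) + (C1 - C2) * g a))"
  proof (rule sum.cong[OF refl])
    fix a assume a: "a \<in> U"
    have "(\<Sum>b\<in>U. g a * g b * (if a = b then C1 else C2)) = (\<Sum>b\<in>U. g a * (C2 * g b) + (if b = a then g a * (C1 - C2) * g a else 0))"
      by (rule sum.cong) (auto simp: algebra_simps)
    also have "\<dots> = g a * (C2 * (\<Sum>b\<in>U. g b) + (C1 - C2) * g a)"
      using U a by (simp add: sum.distrib sum_distrib_left algebra_simps)
    finally show "(\<Sum>b\<in>U. g a * g b * (if a = b then C1 else C2)) = g a * (C2 * (\<Sum>b\<in>U. g b) + (C1 - C2) * g a)" .
  qed
  also have "\<dots> = (\<Sum>a\<in>U. (C2 * (\<Sum>b\<in>U. g b)) * g a + (C1 - C2) * (g a)^2)"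
    by (rule sum.cong) (auto simp: algebra_simps power2_eq_square)
  also have "\<dots> = (C2 * (\<Sum>b\<in>U. g b)) * (\<Sum>a\<in>U. g a) + (C1 - C2) * (\<Sum>a\<in>U. (g a)^2)"
    by (simp only: sum.distrib sum_distrib_left[symmetric])
  also have "\<dots> = C2 * (\<Sum>a\<in>U. g a)^2 + (C1 - C2) * (\<Sum>a\<in>U. (g a)^2)"
    by (simp add: power2_eq_square)
  also have "\<dots> = N * (real k / n * (\<Sum>a\<in>U. (g a)^2)
              + real k * (real k - 1) / (n * (n - 1)) * ((\<Sum>a\<in>U. g a)^2 - (\<Sum>a\<in>U. (g a)^2)))"
    unfolding C1_def C2_def by (simp add: algebra_simps)
  finally show ?thesis .
qed

lemma variance_subsets:
  assumes U: "finite U" and k: "k \<ge> 1" and n2: "card U \<ge> 2"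
  defines "N \<equiv> real (card (KS U k))" and "n \<equiv> real (card U)"
  shows "(\<Sum>A\<in>KS U k. ((\<Sum>a\<in>A. g a) - real k / n * (\<Sum>a\<in>U. g a))^2)
       = N * (real k * (n - real k) / (n * (n - 1))) * ((\<Sum>a\<in>U. (g a)^2) - (\<Sum>a\<in>U. g a)^2 / n)"
proof -
  define m where "m = real k / n * (\<Sum>a\<in>U. g a)"
  define G1 where "G1 = (\<Sum>a\<in>U. g a)"
  define G2 where "G2 = (\<Sum>a\<in>U. (g a)^2)"
  have npos: "n > 1" unfolding n_def using n2 by simp
  have "(\<Sum>A\<in>KS U k. ((\<Sum>a\<in>A. g a) - m)^2)
      = (\<Sum>A\<in>KS U k. (\<Sum>a\<in>A. g a)^2) - 2 * m * (\<Sum>A\<in>KS U k. \<Sum>a\<in>A. g a) + N * m^2"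
    unfolding N_def by (simp add: power2_diff sum.distrib sum_subtractf sum_distrib_left algebra_simps)
  also have "\<dots> = N * (real k / n * G2 + real k * (real k - 1) / (n * (n - 1)) * (G1^2 - G2))
        - 2 * m * (real k * N / n * G1) + N * m^2"
    using moment1[OF U k, of g] moment2[OF U k, of g] unfolding N_def n_def G1_def G2_def by simp
  also have "\<dots> = N * (real k * (n - real k) / (n * (n - 1))) * (G2 - G1^2 / n)"
    unfolding m_def G1_def[symmetric] using npos
    by (simp add: field_simps power2_eq_square)
  finally show ?thesis unfolding m_def G1_def G2_def .
qed

lemma dp_distinct: "distinct_parts l \<Longrightarrow> distinct l"
  unfolding distinct_parts_def by (metis sorted_wrt_iff_nth_less less_irrefl distinct_conv_nth linorder_neq_iff)

lemma dp_less: "distinct_parts l \<Longrightarrow> i < j \<Longrightarrow> j < length l \<Longrightarrow> l ! j < l ! i"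
  unfolding distinct_parts_def by (simp add: sorted_wrt_iff_nth_less)

lemma dp_pos: "distinct_parts l \<Longrightarrow> i < length l \<Longrightarrow> 0 < l ! i"
  unfolding distinct_parts_def is_partition_def by auto

lemma dp_le0: "distinct_parts l \<Longrightarrow> i < length l \<Longrightarrow> l ! i \<le> l ! 0"
  using dp_less[of l 0 i] by (cases "i = 0") auto

lemma hook_upper:
  assumes "distinct_parts l" "i < length l" "j < l ! i"
  shows "hook l i j \<le> l ! 0 + length l - 1"
proof -
  have "card {i'. i < i' \<and> i' < length l \<and> j < l ! i'} \<le> card {i<..<length l}"
    by (rule card_mono) auto
  also have "\<dots> = length l - 1 - i" by simp
  finally have c: "card {i'. i < i' \<and> i' < length l \<and> j < l ! i'} \<le> length l - 1 - i" .
  have "l ! i \<le> l ! 0" using dp_le0 assms by blast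
  then show ?thesis unfolding hook_def using c assms by linarith
qed

lemma discrete_ivt:
  fixes h :: "nat \<Rightarrow> nat"
  assumes "a \<le> b" "h a \<ge> s" "h b < s" "\<And>j. a \<le> j \<Longrightarrow> j < b \<Longrightarrow> h j \<le> h (Suc j) + 2"
  shows "\<exists>j. a \<le> j \<and> j < b \<and> (h j = s \<or> h j = s + 1)"
  using assms
proof (induction "b - a" arbitrary: a)
  case 0 then show ?case by simp
next
  case (Suc d)
  then have ab: "a < b" by simp
  show ?case
  proof (cases "h (Suc a) \<ge> s")
    case True
    have "\<exists>j. Suc a \<le> j \<and> j < b \<and> (h j = s \<or> h j = s + 1)"
      by (rule Suc.hyps(1)) (use Suc.hyps(2) Suc.prems ab True in auto)
    then obtain j where "Suc a \<le> j" "j < b" "h j = s \<or> h j = s + 1" by blast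
    then show ?thesis by (intro exI[of _ j]) auto
  next
    case False
    then have "h a = s \<or> h a = s + 1" using Suc.prems(2) Suc.prems(4)[of a] ab by linarith
    then show ?thesis using ab by blast
  qed
qed

lemma card_step:
  assumes "distinct_parts l"
  shows "card {i'. 0 < i' \<and> i' < length l \<and> j < l ! i'} \<le> card {i'. 0 < i' \<and> i' < length l \<and> Suc j < l ! i'} + 1"
proof -
  have "{i'. 0 < i' \<and> i' < length l \<and> j < l ! i'} \<subseteq> {i'. 0 < i' \<and> i' < length l \<and> Suc j < l ! i'} \<union> {i'. i' < length l \<and> l ! i' = Suc j}"
    by auto
  then have "card {i'. 0 < i' \<and> i' < length l \<and> j < l ! i'} \<le> card ({i'. 0 < i' \<and> i' < length l \<and> Suc j < l ! i'} \<union> {i'. i' < length l \<and> l ! i' = Suc j})"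
    by (intro card_mono) auto
  also have "\<dots> \<le> card {i'. 0 < i' \<and> i' < length l \<and> Suc j < l ! i'} + card {i'. i' < length l \<and> l ! i' = Suc j}"
    by (rule card_Un_le)
  also have "card {i'. i' < length l \<and> l ! i' = Suc j} \<le> 1"
  proof -
    have fin: "finite {i'. i' < length l \<and> l ! i' = Suc j}" by simp
    have "\<forall>x\<in>{i'. i' < length l \<and> l ! i' = Suc j}. \<forall>y\<in>{i'. i' < length l \<and> l ! i' = Suc j}. x = y"
    proof (intro ballI)
      fix x y assume "x \<in> {i'. i' < length l \<and> l ! i' = Suc j}" "y \<in> {i'. i' < length l \<and> l ! i' = Suc j}"
      then have "l ! x = l ! y" "x < length l" "y < length l" by auto
      then show "x = y" using nth_eq_iff_index_eq[OF dp_distinct[OF assms]] by blast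
    qed
    then have "card {i'. i' < length l \<and> l ! i' = Suc j} \<le> Suc 0"
      using card_le_Suc0_iff_eq[OF fin] by blast
    then show ?thesis by simp
  qed
  finally show ?thesis by simp
qed

lemma core_char:
  assumes dp: "distinct_parts l" and len: "length l = k" and k: "k \<ge> 1" and s: "s \<ge> 2"
  shows "(is_core s l \<and> is_core (s + 1) l) \<longleftrightarrow> l ! 0 + k \<le> s"
proof
  assume le: "l ! 0 + k \<le> s"
  have ip: "is_partition l" using dp unfolding distinct_parts_def by simp
  have "hook l i j < s" if "(i, j) \<in> cells l" for i j
    using hook_upper[OF dp, of i j] that le len k unfolding cells_def by auto
  then show "is_core s l \<and> is_core (s + 1) l" unfolding is_core_def using ip by fastforce
next
  assume cores: "is_core s l \<and> is_core (s + 1) l"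
  show "l ! 0 + k \<le> s"
  proof (rule ccontr)
    assume "\<not> l ! 0 + k \<le> s"
    then have big: "l ! 0 + k \<ge> s + 1" by simp
    define m where "m = l ! 0"
    have m0: "m > 0" unfolding m_def using dp_pos[OF dp, of 0] len k by simp
    define h where "h j = hook l 0 j" for j
    have h0: "h 0 = m + (k - 1)"
    proof -
      have "{i'. 0 < i' \<and> i' < length l \<and> 0 < l ! i'} = {0<..<k}"
        using dp_pos[OF dp] len by auto
      then show ?thesis unfolding h_def hook_def m_def using m0 m_def by simp
    qed
    have hlast: "h (m - 1) = 1"
    proof -
      have "{i'. 0 < i' \<and> i' < length l \<and> m - 1 < l ! i'} = {}"
      proof (rule equals0I)
        fix i' assume "i' \<in> {i'. 0 < i' \<and> i' < length l \<and> m - 1 < l ! i'}"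
        then have i': "0 < i'" "i' < length l" "m - 1 < l ! i'" by auto
        have "l ! i' < m" using dp_less[OF dp, of 0 i'] i' unfolding m_def by simp
        then show False using i'(3) by linarith
      qed
      then show ?thesis unfolding h_def hook_def m_def using m0 m_def by simp
    qed
    have step: "h j \<le> h (Suc j) + 2" if "j < m - 1" for j
    proof -
      have "h j = (m - j - 1) + card {i'. 0 < i' \<and> i' < length l \<and> j < l ! i'} + 1"
        unfolding h_def hook_def m_def by simp
      moreover have "h (Suc j) = (m - Suc j - 1) + card {i'. 0 < i' \<and> i' < length l \<and> Suc j < l ! i'} + 1"
        unfolding h_def hook_def m_def by simp
      ultimately show ?thesis using card_step[OF dp, of j] that by linarith
    qed
    have hs: "s \<le> h 0" using h0 big k unfolding m_def by simp
    have hl: "h (m - 1) < s" using hlast s by simp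
    obtain j where j: "j < m - 1" "h j = s \<or> h j = s + 1"
      using hs hl discrete_ivt[where a=0 and b="m - 1" and h=h and s=s] h0 hlast step big s by auto
    have "(0, j) \<in> cells l" unfolding cells_def using j len k m_def by auto
    then show False using cores j unfolding is_core_def h_def by auto
  qed
qed

lemma dp_rev_sorted: "distinct_parts l \<Longrightarrow> sorted (rev l)"
  unfolding distinct_parts_def is_partition_def by (simp add: sorted_wrt_rev)

lemma dp_inj: "inj_on set {l. distinct_parts l}"
proof (rule inj_onI)
  fix x y assume x: "x \<in> {l. distinct_parts l}" and y: "y \<in> {l. distinct_parts l}" and e: "set x = set y"
  have "rev x = rev y"
    by (rule sorted_distinct_set_unique) (use x y e dp_rev_sorted dp_distinct in auto)
  then show "x = y" by simp
qed

lemma cores_inj: "inj_on set (cores_dp s k)"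
  by (rule inj_on_subset[OF dp_inj]) (auto simp: cores_dp_def)

lemma cores_image:
  assumes k: "0 < k" and sk: "2 * k < s"
  shows "set ` cores_dp s k = KS {1..s - k} k"
proof
  show "set ` cores_dp s k \<subseteq> KS {1..s - k} k"
  proof
    fix A assume "A \<in> set ` cores_dp s k"
    then obtain l where l: "l \<in> cores_dp s k" "A = set l" by blast
    have dp: "distinct_parts l" and len: "length l = k" and c: "is_core s l \<and> is_core (s + 1) l"
      using l unfolding cores_dp_def by auto
    have le: "l ! 0 + k \<le> s" using core_char[OF dp len _ _] c k sk by simp
    have "set l \<subseteq> {1..s - k}"
    proof
      fix x assume "x \<in> set l"
      then obtain i where i: "i < length l" "x = l ! i" by (metis in_set_conv_nth)
      then show "x \<in> {1..s - k}" using dp_pos[OF dp i(1)] dp_le0[OF dp i(1)] le by auto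
    qed
    moreover have "card (set l) = k" using dp_distinct[OF dp] len by (simp add: distinct_card)
    ultimately show "A \<in> KS {1..s - k} k" using l unfolding KS_def by auto
  qed
  show "KS {1..s - k} k \<subseteq> set ` cores_dp s k"
  proof
    fix A assume A: "A \<in> KS {1..s - k} k"
    then have AU: "A \<subseteq> {1..s - k}" and cA: "card A = k" unfolding KS_def by auto
    have fA: "finite A" using AU finite_subset by blast
    define l where "l = rev (sorted_list_of_set A)"
    have sl: "set l = A" unfolding l_def using fA by simp
    have len: "length l = k" unfolding l_def using cA by simp
    have sw: "sorted_wrt (>) l" unfolding l_def by (simp add: sorted_wrt_rev)
    have sw2: "sorted_wrt (\<ge>) l" by (rule sorted_wrt_mono_rel[OF _ sw]) auto
    have pos: "\<forall>p\<in>set l. 0 < p" using sl AU by auto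
    have dp: "distinct_parts l" unfolding distinct_parts_def is_partition_def using sw sw2 pos by simp
    have "l ! 0 \<in> A" using sl len k by (metis nth_mem)
    then have "l ! 0 \<le> s - k" using AU by auto
    then have "l ! 0 + k \<le> s" using sk by linarith
    then have "is_core s l \<and> is_core (s + 1) l" using core_char[OF dp len] k sk by simp
    then have "l \<in> cores_dp s k" unfolding cores_dp_def using dp len by simp
    then show "A \<in> set ` cores_dp s k" using sl by blast
  qed
qed

lemma psize_set: assumes "l \<in> cores_dp s k" shows "psize l = \<Sum> (set l)"
proof -
  have "distinct_parts l" using assms by (simp add: cores_dp_def)
  then have "distinct l" by (rule dp_distinct)
  then show ?thesis unfolding psize_def by (rule distinct_sum_list_conv_Sum)
qed

lemma cores_sum:
  assumes k: "0 < k" and sk: "2 * k < s"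
  shows "(\<Sum>l\<in>cores_dp s k. f (psize l)) = (\<Sum>A\<in>KS {1..s - k} k. f (\<Sum> A))"
proof -
  have "(\<Sum>A\<in>KS {1..s - k} k. f (\<Sum> A)) = (\<Sum>A\<in>set ` cores_dp s k. f (\<Sum> A))"
    using cores_image[OF k sk] by simp
  also have "\<dots> = (\<Sum>l\<in>cores_dp s k. f (\<Sum> (set l)))"
    by (rule sum.reindex[OF cores_inj, unfolded comp_def])
  also have "\<dots> = (\<Sum>l\<in>cores_dp s k. f (psize l))"
    by (rule sum.cong) (auto simp: psize_set)
  finally show ?thesis by simp
qed

lemma cores_card_filter:
  assumes k: "0 < k" and sk: "2 * k < s"
  shows "card {l\<in>cores_dp s k. Q (psize l)} = card {A\<in>KS {1..s - k} k. Q (\<Sum> A)}"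
proof -
  have "set ` {l\<in>cores_dp s k. Q (psize l)} = {A\<in>KS {1..s - k} k. Q (\<Sum> A)}" (is "?L = ?R")
  proof
    show "set ` {l\<in>cores_dp s k. Q (psize l)} \<subseteq> {A\<in>KS {1..s - k} k. Q (\<Sum> A)}"
    proof
      fix A assume "A \<in> set ` {l\<in>cores_dp s k. Q (psize l)}"
      then obtain l where l: "l \<in> cores_dp s k" "Q (psize l)" "A = set l" by blast
      then have "A \<in> KS {1..s - k} k" using cores_image[OF k sk] by blast
      moreover have "Q (\<Sum> A)" using l psize_set[OF l(1)] by simp
      ultimately show "A \<in> {A\<in>KS {1..s - k} k. Q (\<Sum> A)}" by simp
    qed
    show "{A\<in>KS {1..s - k} k. Q (\<Sum> A)} \<subseteq> set ` {l\<in>cores_dp s k. Q (psize l)}"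
    proof
      fix A assume A: "A \<in> {A\<in>KS {1..s - k} k. Q (\<Sum> A)}"
      then have "A \<in> set ` cores_dp s k" using cores_image[OF k sk] by simp
      then obtain l where l: "l \<in> cores_dp s k" "A = set l" by blast
      have "Q (psize l)" using A l psize_set[OF l(1)] by simp
      then show "A \<in> set ` {l\<in>cores_dp s k. Q (psize l)}" using l by blast
    qed
  qed
  moreover have "inj_on set {l\<in>cores_dp s k. Q (psize l)}"
    by (rule inj_on_subset[OF cores_inj]) auto
  then have "card (set ` {l\<in>cores_dp s k. Q (psize l)}) = card {l\<in>cores_dp s k. Q (psize l)}"
    by (rule card_image)
  ultimately show ?thesis by simp
qed

lemma cores_card:
  assumes k: "0 < k" and sk: "2 * k < s"
  shows "card (cores_dp s k) = card (KS {1..s - k} k)"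
  using cores_card_filter[OF k sk, of "\<lambda>_. True"] by simp

lemma sum_id_real: "(\<Sum>a\<in>{1..n}. real a) = real n * (real n + 1) / 2"
  by (induction n) (auto simp: field_simps)

lemma sum_sq_real: "(\<Sum>a\<in>{1..n}. (real a)^2) = real n * (real n + 1) * (2 * real n + 1) / 6"
  by (induction n) (auto simp: field_simps power2_eq_square)

lemma sum_4_real: "(\<Sum>a\<in>{1..n}. ((real a)^2)^2) \<le> real n ^ 5"
proof -
  have "(\<Sum>a\<in>{1..n}. ((real a)^2)^2) \<le> (\<Sum>a\<in>{1..n}. real n ^ 4)"
  proof (rule sum_mono)
    fix a assume "a \<in> {1..n}"
    then have "real a \<le> real n" by simp
    then have "real a ^ 4 \<le> real n ^ 4" by (intro power_mono) auto
    then show "((real a)^2)^2 \<le> real n ^ 4" by (simp add: power_mult[symmetric])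
  qed
  also have "\<dots> = real n ^ 5" by (simp add: numeral_eq_Suc)
  finally show ?thesis .
qed

lemma KS_nonempty: assumes "finite U" "k \<le> card U" shows "KS U k \<noteq> {}"
proof -
  have "card (KS U k) > 0" using assms by (simp add: KS_card)
  then show ?thesis by auto
qed

lemma sum_insert_remove:
  fixes f :: "nat \<Rightarrow> real"
  assumes "finite A" "a \<in> A" "b \<notin> A"
  shows "(\<Sum>x\<in>insert b (A - {a}). f x) = (\<Sum>x\<in>A. f x) - f a + f b"
  using assms by (simp add: sum_diff1)

locale app =
  fixes s k :: nat
  assumes k0: "0 < k" and sk: "2 * k < s"
begin

definition "n = s - k"
definition "U = {1..n}"
definition "KK = KS U k"
definition "N = real (card KK)"
definition "Sm A = (\<Sum>a\<in>A. real a)"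
definition "Qm A = (\<Sum>a\<in>A. (real a)^2)"
definition "P = k * (n - k)"

lemma n_ge: "n \<ge> k + 1" unfolding n_def using sk by simp
lemma n2: "n \<ge> 2" using n_ge k0 by simp
lemma nk: "n - k \<ge> 1" using n_ge by simp
lemma finU: "finite U" unfolding U_def by simp
lemma cardU: "card U = n" unfolding U_def by simp
lemma finKK: "finite KK" unfolding KK_def by (rule KS_finite[OF finU])
lemma KK_ne: "KK \<noteq> {}" unfolding KK_def using KS_nonempty[OF finU] cardU n_ge by simp
lemma Npos: "N > 0" unfolding N_def using finKK KK_ne by (simp add: card_gt_0_iff)
lemma k1: "k \<ge> 1" using k0 by simp
lemma Ppos: "P > 0" unfolding P_def using k0 nk by simp
lemma P_real: "real P = real k * (real n - real k)" unfolding P_def using n_ge by (simp add: of_nat_diff)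

lemma cores_KK_sum: "(\<Sum>l\<in>cores_dp s k. f (real (psize l))) = (\<Sum>A\<in>KK. f (Sm A))"
  using cores_sum[OF k0 sk, of "\<lambda>p. f (real p)"] unfolding KK_def U_def n_def Sm_def
  by (simp add: of_nat_sum)

lemma cores_N: "real (card (cores_dp s k)) = N"
  unfolding N_def KK_def U_def n_def using cores_card[OF k0 sk] by simp

lemma mu_eq: "mu s k = (\<Sum>A\<in>KK. Sm A) / N"
  unfolding mu_def using cores_KK_sum[of "\<lambda>x. x"] cores_N by simp

lemma mu_val: "mu s k = real k * (real n + 1) / 2"
proof -
  have "(\<Sum>A\<in>KK. Sm A) = real k * N / real n * (\<Sum>a\<in>U. real a)"
    unfolding KK_def Sm_def N_def using moment1[OF finU k1, of real] cardU by simp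
  also have "(\<Sum>a\<in>U. real a) = real n * (real n + 1) / 2" unfolding U_def by (rule sum_id_real)
  finally have e: "(\<Sum>A\<in>KK. Sm A) = real k * N / real n * (real n * (real n + 1) / 2)" .
  have rn: "real n > 0" using n2 by simp
  have "(\<Sum>A\<in>KK. Sm A) = real k * N * (real n + 1) / 2" unfolding e using rn by (simp add: field_simps)
  then show ?thesis unfolding mu_eq using Npos by (simp add: field_simps)
qed

lemma mu_center: "mu s k = real k / real n * (\<Sum>a\<in>U. real a)"
  unfolding mu_val U_def sum_id_real using n2 by (simp add: field_simps)

lemma var_eq: "var s k = (\<Sum>A\<in>KK. (Sm A - mu s k)^2) / N"
  unfolding var_def using cores_KK_sum[of "\<lambda>x. (x - mu s k)^2"] cores_N by simp

lemma var_val: "var s k = real P * (real n + 1) / 12"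
proof -
  have "(\<Sum>A\<in>KK. (Sm A - mu s k)^2) = N * (real k * (real n - real k) / (real n * (real n - 1))) *
          ((\<Sum>a\<in>U. (real a)^2) - (\<Sum>a\<in>U. real a)^2 / real n)"
    unfolding KK_def Sm_def N_def mu_center using variance_subsets[OF finU k1, of real] cardU n2 by simp
  also have "(\<Sum>a\<in>U. (real a)^2) - (\<Sum>a\<in>U. real a)^2 / real n = real n * (real n + 1) * (real n - 1) / 12"
    unfolding U_def sum_id_real sum_sq_real using n2 by (simp add: field_simps power2_eq_square)
  finally have "(\<Sum>A\<in>KK. (Sm A - mu s k)^2) = N * (real k * (real n - real k) / (real n * (real n - 1))) *
          (real n * (real n + 1) * (real n - 1) / 12)" .
  also have "\<dots> = N * (real k * (real n - real k) * (real n + 1) / 12)"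
    using n2 by (simp add: field_simps)
  finally show ?thesis unfolding var_eq P_real using Npos by simp
qed

lemma var_pos: "var s k > 0" unfolding var_val using Ppos by simp

definition "sg = sigma s k"
lemma sg_pos: "sg > 0" unfolding sg_def sigma_def using var_pos by simp
lemma sg_sq: "sg^2 = real P * (real n + 1) / 12" unfolding sg_def sigma_def using var_pos var_val by simp

definition "W A = (Sm A - mu s k) / sg"

lemma std_cdf_eq: "std_cdf s k x = real (card {A\<in>KK. W A \<le> x}) / N"
proof -
  have "card {l\<in>cores_dp s k. (real (psize l) - mu s k) / sigma s k \<le> x} = card {A\<in>KK. W A \<le> x}"
    using cores_card_filter[OF k0 sk, of "\<lambda>p. (real p - mu s k) / sigma s k \<le> x"]
    unfolding KK_def U_def n_def W_def Sm_def sg_def by (simp add: of_nat_sum)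
  then show ?thesis unfolding std_cdf_def cores_N by simp
qed

end

context app
begin

definition "TT A = A \<times> (U - A)"
definition "swp x = (insert (snd (snd x)) (fst x - {fst (snd x)}), (snd (snd x), fst (snd x)))"
definition "lam = real n / real P"
definition "del = real n / sg"

lemma KK_sub: "A \<in> KK \<Longrightarrow> A \<subseteq> U" unfolding KK_def KS_def by auto
lemma KK_card: "A \<in> KK \<Longrightarrow> card A = k" unfolding KK_def KS_def by auto
lemma KK_fin: "A \<in> KK \<Longrightarrow> finite A" using KK_sub finU finite_subset by blast

lemma Sm_swap: assumes "A \<in> KK" "a \<in> A" "b \<notin> A"
  shows "Sm (insert b (A - {a})) = Sm A - real a + real b"
  unfolding Sm_def using sum_insert_remove[OF KK_fin[OF assms(1)] assms(2,3)] by simp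

lemma G1_split: "A \<in> KK \<Longrightarrow> (\<Sum>b\<in>U - A. f b) = (\<Sum>b\<in>U. f b) - (\<Sum>b\<in>A. (f b :: real))"
  using finU KK_sub by (simp add: sum_diff)

lemma card_compl: "A \<in> KK \<Longrightarrow> card (U - A) = n - k"
  using finU KK_sub KK_card cardU by (simp add: card_Diff_subset KK_fin)

lemma lam_P: "lam * real P = real n" unfolding lam_def using Ppos by simp

lemma stein_inst: "stein_pair KK TT swp W P lam del"
proof
  show "finite KK" by (rule finKK)
  show "KK \<noteq> {}" by (rule KK_ne)
  show "\<And>A. A \<in> KK \<Longrightarrow> finite (TT A)" unfolding TT_def using KK_fin finU by simp
  show "\<And>A. A \<in> KK \<Longrightarrow> card (TT A) = P" unfolding TT_def P_def
    by (simp add: card_cartesian_product KK_card card_compl)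
  show "0 < P" by (rule Ppos)
  show "\<And>x. x \<in> Sigma KK TT \<Longrightarrow> swp x \<in> Sigma KK TT"
  proof -
    fix x assume "x \<in> Sigma KK TT"
    then obtain A a b where x: "x = (A, (a, b))" "A \<in> KK" "a \<in> A" "b \<in> U" "b \<notin> A"
      unfolding TT_def by auto
    have fA: "finite A" using KK_fin[OF x(2)] .
    have ab: "a \<noteq> b" using x by auto
    have "card (A - {a}) = k - 1" using fA x KK_card by simp
    then have "card (insert b (A - {a})) = k" using fA x k1 by simp
    moreover have "insert b (A - {a}) \<subseteq> U" using KK_sub[OF x(2)] x by auto
    ultimately have "insert b (A - {a}) \<in> KK" unfolding KK_def KS_def by simp
    moreover have "a \<in> U" using KK_sub[OF x(2)] x by auto
    ultimately show "swp x \<in> Sigma KK TT" unfolding swp_def TT_def using x ab by auto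
  qed
  show "\<And>x. x \<in> Sigma KK TT \<Longrightarrow> swp (swp x) = x"
  proof -
    fix x assume "x \<in> Sigma KK TT"
    then obtain A a b where x: "x = (A, (a, b))" "A \<in> KK" "a \<in> A" "b \<in> U" "b \<notin> A"
      unfolding TT_def by auto
    have "insert a (insert b (A - {a}) - {b}) = A" using x by auto
    then show "swp (swp x) = x" unfolding swp_def using x by simp
  qed
  show "0 < lam" unfolding lam_def using Ppos n2 by simp
  show "\<And>x. x \<in> Sigma KK TT \<Longrightarrow> \<bar>W (fst (swp x)) - W (fst x)\<bar> \<le> del"
  proof -
    fix x assume "x \<in> Sigma KK TT"
    then obtain A a b where x: "x = (A, (a, b))" "A \<in> KK" "a \<in> A" "b \<in> U" "b \<notin> A"
      unfolding TT_def by auto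
    have aU: "a \<in> U" using KK_sub[OF x(2)] x by auto
    have "W (fst (swp x)) - W (fst x) = (real b - real a) / sg"
      unfolding swp_def W_def using x Sm_swap[OF x(2,3,5)] by (simp add: diff_divide_distrib[symmetric])
    moreover have "\<bar>real b - real a\<bar> \<le> real n" using aU x(4) unfolding U_def by auto
    ultimately show "\<bar>W (fst (swp x)) - W (fst x)\<bar> \<le> del"
      unfolding del_def using sg_pos by (simp add: divide_right_mono)
  qed
  show "\<And>A. A \<in> KK \<Longrightarrow> (\<Sum>t\<in>TT A. W (fst (swp (A, t))) - W A) = - lam * real P * W A"
  proof -
    fix A assume A: "A \<in> KK"
    have "(\<Sum>t\<in>TT A. W (fst (swp (A, t))) - W A) = (\<Sum>t\<in>A \<times> (U - A). (real (snd t) - real (fst t)) / sg)"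
    proof (rule sum.cong)
      fix t assume "t \<in> A \<times> (U - A)"
      then obtain a b where t: "t = (a, b)" "a \<in> A" "b \<in> U" "b \<notin> A" by auto
      show "W (fst (swp (A, t))) - W A = (real (snd t) - real (fst t)) / sg"
        unfolding swp_def W_def using t Sm_swap[OF A t(2,4)] by (simp add: diff_divide_distrib[symmetric])
    qed (simp add: TT_def)
    also have "\<dots> = (\<Sum>a\<in>A. \<Sum>b\<in>U - A. (real b - real a) / sg)"
      by (simp add: sum.cartesian_product split_beta)
    also have "\<dots> = (\<Sum>a\<in>A. ((\<Sum>b\<in>U - A. real b) - real (n - k) * real a) / sg)"
      using finU by (simp add: sum_subtractf sum_divide_distrib[symmetric] card_compl[OF A])
    also have "\<dots> = (real k * ((\<Sum>b\<in>U. real b) - Sm A) - real (n - k) * Sm A) / sg"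
      unfolding G1_split[OF A] Sm_def
      by (simp add: sum_divide_distrib[symmetric] sum_subtractf sum_distrib_left KK_card[OF A])
    also have "\<dots> = - real n * (Sm A - mu s k) / sg"
    proof -
      have rn: "real n > 0" using n2 by simp
      show ?thesis unfolding mu_center using n_ge rn sg_pos by (simp add: field_simps of_nat_diff)
    qed
    also have "\<dots> = - lam * real P * W A" using lam_P by (simp add: W_def)
    finally show "(\<Sum>t\<in>TT A. W (fst (swp (A, t))) - W A) = - lam * real P * W A" .
  qed
  show "(\<Sum>A\<in>KK. (W A)^2) = real (card KK)"
  proof -
    have "(\<Sum>A\<in>KK. (W A)^2) = (\<Sum>A\<in>KK. (Sm A - mu s k)^2) / sg^2"
      unfolding W_def by (simp add: power_divide sum_divide_distrib)
    also have "\<dots> = N * var s k / sg^2" using var_eq Npos by (simp add: field_simps)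
    also have "\<dots> = N" using sg_pos var_pos unfolding sg_def sigma_def by simp
    finally show ?thesis unfolding N_def .
  qed
qed

end

context app
begin

interpretation st: stein_pair KK TT swp W P lam del by (rule stein_inst)

definition "G1 = (\<Sum>a\<in>U. real a)"
definition "G2 = (\<Sum>a\<in>U. (real a)^2)"
definition "Y A = real k * G2 + (real n - 2 * real k) * Qm A - 2 * Sm A * (G1 - Sm A)"
definition "qb = real k / real n * G2"

lemma G1_val: "G1 = real n * (real n + 1) / 2" unfolding G1_def U_def by (rule sum_id_real)
lemma G2_val: "G2 = real n * (real n + 1) * (2 * real n + 1) / 6" unfolding G2_def U_def by (rule sum_sq_real)
lemma rn_pos: "real n > 0" using n2 by simp

lemma D_val: assumes "A \<in> KK" "t \<in> TT A" shows "st.D (A, t) = (real (snd t) - real (fst t)) / sg"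
proof -
  obtain a b where t: "t = (a, b)" "a \<in> A" "b \<in> U" "b \<notin> A" using assms(2) unfolding TT_def by auto
  show ?thesis unfolding st.D_def swp_def W_def using t Sm_swap[OF assms(1) t(2,4)]
    by (simp add: diff_divide_distrib[symmetric])
qed

lemma B_val: assumes A: "A \<in> KK" shows "st.B A = Y A / (2 * real n * sg^2)"
proof -
  have "(\<Sum>t\<in>TT A. (st.D (A, t))^2) = (\<Sum>t\<in>A \<times> (U - A). (real (snd t) - real (fst t))^2) / sg^2"
    unfolding sum_divide_distrib
    by (rule sum.cong) (auto simp: TT_def D_val[OF A] power_divide)
  also have "(\<Sum>t\<in>A \<times> (U - A). (real (snd t) - real (fst t))^2) = (\<Sum>a\<in>A. \<Sum>b\<in>U - A. (real b - real a)^2)"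
    by (simp add: sum.cartesian_product split_beta)
  also have "\<dots> = (\<Sum>a\<in>A. (G2 - Qm A) - 2 * real a * (G1 - Sm A) + real (n - k) * (real a)^2)"
  proof (rule sum.cong[OF refl])
    fix a assume "a \<in> A"
    have "(\<Sum>b\<in>U - A. (real b - real a)^2) = (\<Sum>b\<in>U - A. (real b)^2 - 2 * real a * real b + (real a)^2)"
      by (rule sum.cong) (auto simp: power2_diff)
    also have "\<dots> = (\<Sum>b\<in>U - A. (real b)^2) - 2 * real a * (\<Sum>b\<in>U - A. real b) + real (n - k) * (real a)^2"
      by (simp add: sum.distrib sum_subtractf sum_distrib_left card_compl[OF A])
    also have "\<dots> = (G2 - Qm A) - 2 * real a * (G1 - Sm A) + real (n - k) * (real a)^2"
      unfolding G1_split[OF A] G1_def G2_def Qm_def Sm_def ..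
    finally show "(\<Sum>b\<in>U - A. (real b - real a)^2) = (G2 - Qm A) - 2 * real a * (G1 - Sm A) + real (n - k) * (real a)^2" .
  qed
  also have "\<dots> = real k * (G2 - Qm A) - 2 * Sm A * (G1 - Sm A) + real (n - k) * Qm A"
    unfolding Sm_def Qm_def
    by (simp add: sum.distrib sum_subtractf sum_distrib_left sum_distrib_right KK_card[OF A] algebra_simps)
  also have "\<dots> = Y A" unfolding Y_def using n_ge by (simp add: of_nat_diff algebra_simps)
  finally have e: "(\<Sum>t\<in>TT A. (st.D (A, t))^2) = Y A / sg^2" .
  show ?thesis unfolding st.B_def e using lam_P by (simp add: field_simps mult.assoc)
qed

lemma Sm_W: "Sm A = mu s k + sg * W A" unfolding W_def using sg_pos by simp

lemma const_id: "real k * G2 - 2 * mu s k * G1 + 2 * (mu s k)^2 = 2 * (real n - 1) * sg^2 - (real n - 2 * real k) * qb"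
  unfolding sg_sq P_real G1_val G2_val mu_val qb_def using rn_pos
  by (simp add: field_simps power2_eq_square)

lemma Y_id: "Y A - 2 * real n * sg^2 = (real n - 2 * real k) * (Qm A - qb) - 2 * sg * (G1 - 2 * mu s k) * W A + 2 * sg^2 * ((W A)^2 - 1)"
proof -
  have "Y A - 2 * real n * sg^2 - ((real n - 2 * real k) * (Qm A - qb) - 2 * sg * (G1 - 2 * mu s k) * W A + 2 * sg^2 * ((W A)^2 - 1))
      = (real k * G2 - 2 * mu s k * G1 + 2 * (mu s k)^2) - (2 * (real n - 1) * sg^2 - (real n - 2 * real k) * qb)"
    unfolding Y_def Sm_W by (simp add: algebra_simps power2_eq_square)
  then show ?thesis using const_id by simp
qed

end

lemma le_c_sqrt: fixes x c y :: real
  assumes "0 \<le> c" "0 \<le> y" "x^2 \<le> c^2 * y" shows "x \<le> c * sqrt y"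
proof -
  have "x \<le> sqrt (x^2)" by simp
  also have "\<dots> \<le> sqrt (c^2 * y)" using assms(3) by (rule real_sqrt_le_mono)
  also have "\<dots> = c * sqrt y" using assms(1) by (simp add: real_sqrt_mult)
  finally show ?thesis .
qed

lemma numeric:
  fixes n P sg :: real
  assumes n: "n \<ge> 2" and P1: "P \<ge> 1" and Pn: "P \<le> n^2" and sg: "sg > 0" and sq: "sg^2 = P * (n + 1) / 12"
  shows "sqrt (2 * P * n^3) / sg^2 + (n + 1) / sg + 4 / n + 8 * (n / sg) + 4 * (n / sg)^3 / (n / P)
         \<le> 300 * sqrt (n / P)"
proof -
  define e where "e = n / P"
  have Ppos: "P > 0" using P1 by simp
  have npos: "n > 0" using n by simp
  have e0: "e > 0" unfolding e_def using Ppos npos by simp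
  have nn1: "n \<le> n + 1" by simp
  have sg2pos: "sg^2 > 0" using sg by simp
  have t1: "sqrt (2 * P * n^3) / sg^2 \<le> 17 * sqrt e"
  proof (rule le_c_sqrt)
    have "(sqrt (2 * P * n^3) / sg^2)^2 = 2 * P * n^3 / (sg^2)^2"
      using Ppos npos by (simp add: power_divide)
    also have "\<dots> = 288 * n^3 / (P * (n+1)^2)"
    proof -
      have nz1: "(P * (n + 1) / 12)^2 \<noteq> 0" using Ppos npos by simp
      have nz2: "P * (n+1)^2 \<noteq> 0" using Ppos npos by simp
      show ?thesis unfolding sq
        by (subst frac_eq_eq[OF nz1 nz2]) (simp add: algebra_simps power2_eq_square power3_eq_cube)
    qed
    also have "\<dots> = 288 * (n * (n^2 / (n+1)^2)) / P"
      using Ppos npos by (simp add: field_simps power2_eq_square power3_eq_cube)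
    also have "\<dots> \<le> 288 * (n * 1) / P"
    proof -
      have "n^2 / (n+1)^2 \<le> 1" using npos by (simp add: power_mono)
      then have h: "n * (n^2 / (n+1)^2) \<le> n * 1" using npos by (intro mult_left_mono) auto
      show ?thesis by (intro divide_right_mono mult_left_mono h) (use Ppos in auto)
    qed
    also have "\<dots> \<le> 17^2 * e" unfolding e_def using Ppos npos by (simp add: divide_right_mono)
    finally show "(sqrt (2 * P * n^3) / sg^2)^2 \<le> 17^2 * e" .
  qed (use e0 in auto)
  have t2: "(n + 1) / sg \<le> 5 * sqrt e"
  proof (rule le_c_sqrt)
    have "((n + 1) / sg)^2 = (n+1)^2 / sg^2" by (simp add: power_divide)
    also have "\<dots> = 12 * (n + 1) / P"
    proof -
      have nz1: "P * (n + 1) / 12 \<noteq> 0" using Ppos npos by simp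
      have nz2: "P \<noteq> 0" using Ppos by simp
      show ?thesis unfolding sq
        by (subst frac_eq_eq[OF nz1 nz2]) (simp add: field_simps power2_eq_square)
    qed
    also have "\<dots> \<le> 5^2 * e" unfolding e_def using Ppos n by (simp add: divide_right_mono)
    finally show "((n + 1) / sg)^2 \<le> 5^2 * e" .
  qed (use e0 in auto)
  have t3: "4 / n \<le> 4 * sqrt e"
  proof (rule le_c_sqrt)
    have "P \<le> n^3"
    proof -
      have "n^2 \<le> n^3" using n by (simp add: power_increasing)
      then show ?thesis using Pn by simp
    qed
    then have "1 / n^2 \<le> n / P" using Ppos npos by (simp add: field_simps power2_eq_square power3_eq_cube)
    then have "16 * (1 / n^2) \<le> 16 * e" unfolding e_def by simp
    then show "(4 / n)^2 \<le> 4^2 * e" by (simp add: power_divide)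
  qed (use e0 in auto)
  have t4: "8 * (n / sg) \<le> 40 * sqrt e"
  proof (rule le_c_sqrt)
    have "(8 * (n / sg))^2 = 64 * n^2 / sg^2" by (simp add: power_divide power_mult_distrib)
    also have "\<dots> = 768 * (n * (n / (n+1))) / P"
    proof -
      have nz1: "P * (n + 1) / 12 \<noteq> 0" using Ppos npos by simp
      have nz2: "P \<noteq> 0" using Ppos by simp
      have "768 * (n * (n / (n+1))) = 768 * n^2 / (n + 1)" by (simp add: power2_eq_square)
      moreover have "64 * n^2 / (P * (n + 1) / 12) = (768 * n^2 / (n + 1)) / P"
        using Ppos npos by (simp add: field_simps)
      ultimately show ?thesis unfolding sq by (simp add: power2_eq_square mult.commute)
    qed
    also have "\<dots> \<le> 768 * (n * 1) / P"
    proof -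
      have "n / (n+1) \<le> 1" using npos by simp
      then have h: "n * (n / (n+1)) \<le> n * 1" using npos by (intro mult_left_mono) auto
      show ?thesis by (intro divide_right_mono mult_left_mono h) (use Ppos in auto)
    qed
    also have "\<dots> \<le> 40^2 * e" unfolding e_def using Ppos npos by (simp add: divide_right_mono)
    finally show "(8 * (n / sg))^2 \<le> 40^2 * e" .
  qed (use e0 in auto)
  have t5: "4 * (n / sg)^3 / (n / P) \<le> 168 * sqrt e"
  proof (rule le_c_sqrt)
    have a1: "4 * (n / sg)^3 / (n / P) = 4 * n^2 * P / sg^3"
      using Ppos npos sg by (simp add: field_simps power2_eq_square power3_eq_cube)
    have a2: "(4 * n^2 * P / sg^3)^2 = 16 * n^4 * P^2 / (sg^2)^3"
      by (simp add: power_divide power_mult_distrib power_mult[symmetric])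
    have a3: "16 * n^4 * P^2 / (sg^2)^3 = 27648 * (n * (n^3 / (n+1)^3)) / P"
    proof -
      have nz1: "(P * (n + 1) / 12)^3 \<noteq> 0" using Ppos npos by simp
      have nz2: "P * (n+1)^3 \<noteq> 0" using Ppos npos by simp
      have "16 * n^4 * P^2 / (P * (n + 1) / 12)^3 = 27648 * n^4 / (P * (n+1)^3)"
        by (subst frac_eq_eq[OF nz1 nz2]) (simp add: field_simps power2_eq_square power3_eq_cube power4_eq_xxxx)
      also have "\<dots> = 27648 * (n * (n^3 / (n+1)^3)) / P"
        using Ppos npos by (simp add: field_simps power3_eq_cube power4_eq_xxxx)
      finally show ?thesis unfolding sq .
    qed
    have a4: "27648 * (n * (n^3 / (n+1)^3)) / P \<le> 27648 * (n * 1) / P"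
    proof -
      have "n^3 / (n+1)^3 \<le> 1" using npos by (simp add: power_mono)
      then have h: "n * (n^3 / (n+1)^3) \<le> n * 1" using npos by (intro mult_left_mono) auto
      show ?thesis by (intro divide_right_mono mult_left_mono h) (use Ppos in auto)
    qed
    have a5: "27648 * (n * 1) / P \<le> 168^2 * e" unfolding e_def using Ppos npos by (simp add: divide_right_mono)
    show "(4 * (n / sg)^3 / (n / P))^2 \<le> 168^2 * e" unfolding a1 a2 a3 using a4 a5 by linarith
  qed (use e0 in auto)
  have "sqrt e \<ge> 0" using e0 by simp
  then show ?thesis using t1 t2 t3 t4 t5 unfolding e_def by linarith
qed

lemma sum_abs_le_sqrt:
  fixes f :: "'a \<Rightarrow> real"
  assumes fin: "finite K" and V: "V > 0" and sq: "(\<Sum>A\<in>K. (f A)^2) \<le> real (card K) * V"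
  shows "(\<Sum>A\<in>K. \<bar>f A\<bar>) \<le> real (card K) * sqrt V"
proof -
  define t where "t = sqrt V"
  have t0: "t > 0" unfolding t_def using V by simp
  have tt: "t * t = V" unfolding t_def using V by simp
  have pw: "\<bar>x\<bar> \<le> (x^2 / t + t) / 2" for x :: real
  proof -
    have "0 \<le> (\<bar>x\<bar> - t)^2" by simp
    then have "2 * t * \<bar>x\<bar> \<le> x^2 + t * t" by (simp add: power2_eq_square algebra_simps)
    then show ?thesis using t0 by (simp add: field_simps power2_eq_square)
  qed
  have "(\<Sum>A\<in>K. \<bar>f A\<bar>) \<le> (\<Sum>A\<in>K. ((f A)^2 / t + t) / 2)" by (rule sum_mono) (rule pw)
  also have "\<dots> = ((\<Sum>A\<in>K. (f A)^2) / t + real (card K) * t) / 2"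
    by (simp add: sum_divide_distrib[symmetric] sum.distrib)
  also have "\<dots> \<le> ((real (card K) * V) / t + real (card K) * t) / 2"
    using sq t0 by (simp add: divide_right_mono)
  also have "\<dots> = real (card K) * t" using t0 tt by (simp add: field_simps)
  finally show ?thesis unfolding t_def .
qed

context app
begin

interpretation st: stein_pair KK TT swp W P lam del by (rule stein_inst)

lemma sumQ: "(\<Sum>A\<in>KK. (Qm A - qb)^2) \<le> N * (2 * real P * real n^3)"
proof -
  have rn: "real n \<ge> 2" using n2 by simp
  have e: "(\<Sum>A\<in>KK. (Qm A - qb)^2) = N * (real k * (real n - real k) / (real n * (real n - 1))) *
      ((\<Sum>a\<in>U. ((real a)^2)^2) - (\<Sum>a\<in>U. (real a)^2)^2 / real n)"
    unfolding KK_def Qm_def N_def qb_def G2_def using variance_subsets[OF finU k1, of "\<lambda>a. (real a)^2"] cardU n2 by simp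
  have c0: "0 \<le> real k * (real n - real k) / (real n * (real n - 1))" using n_ge rn by simp
  have "(\<Sum>a\<in>U. ((real a)^2)^2) - (\<Sum>a\<in>U. (real a)^2)^2 / real n \<le> real n ^ 5"
  proof -
    have "0 \<le> (\<Sum>a\<in>U. (real a)^2)^2 / real n" by simp
    moreover have "(\<Sum>a\<in>U. ((real a)^2)^2) \<le> real n ^ 5" unfolding U_def by (rule sum_4_real)
    ultimately show ?thesis by linarith
  qed
  then have "(\<Sum>A\<in>KK. (Qm A - qb)^2) \<le> N * (real k * (real n - real k) / (real n * (real n - 1))) * real n ^ 5"
  proof -
    have c0': "0 \<le> N * (real k * (real n - real k) / (real n * (real n - 1)))"
      using Npos c0 by (intro mult_nonneg_nonneg) auto
    show ?thesis unfolding e by (rule mult_left_mono[OF _ c0']) fact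
  qed
  also have "real k * (real n - real k) / (real n * (real n - 1)) * real n ^ 5 \<le> 2 * real P * real n^3"
  proof -
    have "real k * (real n - real k) / (real n * (real n - 1)) * real n ^ 5 = real P * (real n^4 / (real n - 1))"
      unfolding P_real using rn by (simp add: field_simps power_Suc numeral_eq_Suc)
    also have "real n^4 / (real n - 1) \<le> 2 * real n^3"
    proof -
      have "real n^4 = real n * real n^3" by (simp add: numeral_eq_Suc)
      also have "\<dots> \<le> (2 * (real n - 1)) * real n^3" using rn by (intro mult_right_mono) auto
      finally show ?thesis using rn by (simp add: field_simps)
    qed
    then have "real P * (real n^4 / (real n - 1)) \<le> real P * (2 * real n^3)" by (intro mult_left_mono) auto
    finally show ?thesis by simp
  qed
  then have "N * (real k * (real n - real k) / (real n * (real n - 1)) * real n ^ 5) \<le> N * (2 * real P * real n^3)"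
    using Npos by (intro mult_left_mono) auto
  then have "N * (real k * (real n - real k) / (real n * (real n - 1))) * real n ^ 5 \<le> N * (2 * real P * real n^3)"
    by (simp only: mult.assoc)
  finally show ?thesis .
qed

lemma abs1B: assumes A: "A \<in> KK"
  shows "\<bar>1 - st.B A\<bar> \<le> (real n * \<bar>Qm A - qb\<bar> + sg * (real n * (real n + 1)) * \<bar>W A\<bar> + 2 * sg^2 * \<bar>(W A)^2 - 1\<bar>) / (2 * real n * sg^2)"
proof -
  have d0: "2 * real n * sg^2 > 0" using rn_pos sg_pos by simp
  have "1 - st.B A = (2 * real n * sg^2 - Y A) / (2 * real n * sg^2)"
    unfolding B_val[OF A] using d0 n2 sg_pos by (simp add: diff_divide_distrib)
  then have e: "\<bar>1 - st.B A\<bar> = \<bar>Y A - 2 * real n * sg^2\<bar> / (2 * real n * sg^2)"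
    using d0 by (simp add: abs_minus_commute)
  have kn: "real k \<le> real n" using n_ge by simp
  have a1: "\<bar>real n - 2 * real k\<bar> \<le> real n" using kn k0 by auto
  have a2: "\<bar>G1 - 2 * mu s k\<bar> \<le> real n * (real n + 1) / 2"
  proof -
    have "G1 - 2 * mu s k = (real n + 1) * (real n - 2 * real k) / 2"
      unfolding G1_val mu_val by (simp add: field_simps)
    then have "\<bar>G1 - 2 * mu s k\<bar> = (real n + 1) * \<bar>real n - 2 * real k\<bar> / 2"
      by (subst \<open>G1 - 2 * mu s k = _\<close>) (simp add: abs_mult)
    also have "\<dots> \<le> (real n + 1) * real n / 2" using a1 by (intro divide_right_mono mult_left_mono) auto
    finally show ?thesis by (simp add: mult.commute)
  qed
  have "\<bar>Y A - 2 * real n * sg^2\<bar> \<le> \<bar>(real n - 2 * real k) * (Qm A - qb)\<bar> + \<bar>2 * sg * (G1 - 2 * mu s k) * W A\<bar> + \<bar>2 * sg^2 * ((W A)^2 - 1)\<bar>"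
    unfolding Y_id by (smt (verit) abs_triangle_ineq4 abs_triangle_ineq)
  also have "\<dots> \<le> real n * \<bar>Qm A - qb\<bar> + sg * (real n * (real n + 1)) * \<bar>W A\<bar> + 2 * sg^2 * \<bar>(W A)^2 - 1\<bar>"
  proof (intro add_mono)
    show "\<bar>(real n - 2 * real k) * (Qm A - qb)\<bar> \<le> real n * \<bar>Qm A - qb\<bar>"
      using a1 by (simp add: abs_mult mult_right_mono)
    have "\<bar>2 * sg * (G1 - 2 * mu s k) * W A\<bar> = 2 * sg * \<bar>G1 - 2 * mu s k\<bar> * \<bar>W A\<bar>"
      using sg_pos by (simp add: abs_mult)
    also have "\<dots> \<le> 2 * sg * (real n * (real n + 1) / 2) * \<bar>W A\<bar>"
      using a2 sg_pos by (intro mult_right_mono mult_left_mono) auto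
    finally show "\<bar>2 * sg * (G1 - 2 * mu s k) * W A\<bar> \<le> sg * (real n * (real n + 1)) * \<bar>W A\<bar>" by simp
    show "\<bar>2 * sg^2 * ((W A)^2 - 1)\<bar> \<le> 2 * sg^2 * \<bar>(W A)^2 - 1\<bar>" by (simp add: abs_mult)
  qed
  finally show ?thesis unfolding e using d0 by (simp add: divide_right_mono)
qed

lemma sum1B: "(\<Sum>A\<in>KK. \<bar>1 - st.B A\<bar>) \<le> N * (real n * sqrt (2 * real P * real n^3) + sg * (real n * (real n + 1)) + 4 * sg^2) / (2 * real n * sg^2)"
proof -
  have d0: "2 * real n * sg^2 > 0" using rn_pos sg_pos by simp
  have sQ: "(\<Sum>A\<in>KK. \<bar>Qm A - qb\<bar>) \<le> N * sqrt (2 * real P * real n^3)"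
    using sum_abs_le_sqrt[OF finKK _ sumQ[unfolded N_def]] Ppos rn_pos unfolding N_def by simp
  have sW: "(\<Sum>A\<in>KK. \<bar>W A\<bar>) \<le> N" using st.sum_absW unfolding N_def .
  have sW2: "(\<Sum>A\<in>KK. \<bar>(W A)^2 - 1\<bar>) \<le> 2 * N"
  proof -
    have "(\<Sum>A\<in>KK. \<bar>(W A)^2 - 1\<bar>) \<le> (\<Sum>A\<in>KK. (W A)^2 + 1)"
    proof (rule sum_mono)
      fix A
      have h: "0 \<le> (W A)^2" by simp
      then show "\<bar>(W A)^2 - 1\<bar> \<le> (W A)^2 + 1" by (simp add: abs_le_iff)
    qed
    also have "\<dots> = 2 * N" using st.var1 unfolding N_def by (simp add: sum.distrib)
    finally show ?thesis .
  qed
  have "(\<Sum>A\<in>KK. \<bar>1 - st.B A\<bar>) \<le> (\<Sum>A\<in>KK. (real n * \<bar>Qm A - qb\<bar> + sg * (real n * (real n + 1)) * \<bar>W A\<bar> + 2 * sg^2 * \<bar>(W A)^2 - 1\<bar>) / (2 * real n * sg^2))"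
    by (rule sum_mono) (rule abs1B)
  also have "\<dots> = (real n * (\<Sum>A\<in>KK. \<bar>Qm A - qb\<bar>) + sg * (real n * (real n + 1)) * (\<Sum>A\<in>KK. \<bar>W A\<bar>) + 2 * sg^2 * (\<Sum>A\<in>KK. \<bar>(W A)^2 - 1\<bar>)) / (2 * real n * sg^2)"
    by (simp add: sum_divide_distrib[symmetric] sum.distrib sum_distrib_left)
  also have "\<dots> \<le> (real n * (N * sqrt (2 * real P * real n^3)) + sg * (real n * (real n + 1)) * N + 2 * sg^2 * (2 * N)) / (2 * real n * sg^2)"
    using d0 sQ sW sW2 sg_pos rn_pos
    by (intro divide_right_mono add_mono mult_left_mono) auto
  also have "\<dots> = N * (real n * sqrt (2 * real P * real n^3) + sg * (real n * (real n + 1)) + 4 * sg^2) / (2 * real n * sg^2)"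
    by (simp add: algebra_simps)
  finally show ?thesis .
qed

theorem main_bound: "\<bar>std_cdf s k x - Phi x\<bar> \<le> 300 * sqrt (real n / real P)"
proof -
  have d0: "real n * sg^2 > 0" using rn_pos sg_pos by simp
  have sk1: "\<bar>real (card {A\<in>KK. W A \<le> x}) / real (card KK) - Phi x\<bar>
     \<le> 2 * (\<Sum>A\<in>KK. \<bar>1 - st.B A\<bar>) / real (card KK) + 8 * del + 4 * del^3 / lam"
    by (rule st.stein_kolmogorov)
  have "2 * (\<Sum>A\<in>KK. \<bar>1 - st.B A\<bar>) / real (card KK) \<le> 2 * (N * (real n * sqrt (2 * real P * real n^3) + sg * (real n * (real n + 1)) + 4 * sg^2) / (2 * real n * sg^2)) / N"
    using sum1B Npos unfolding N_def by (intro divide_right_mono mult_left_mono) auto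
  also have "\<dots> = sqrt (2 * real P * real n^3) / sg^2 + (real n + 1) / sg + 4 / real n"
    using Npos d0 sg_pos rn_pos by (simp add: field_simps power2_eq_square)
  finally have a: "2 * (\<Sum>A\<in>KK. \<bar>1 - st.B A\<bar>) / real (card KK) \<le> sqrt (2 * real P * real n^3) / sg^2 + (real n + 1) / sg + 4 / real n" .
  have Pn: "real P \<le> (real n)^2"
  proof -
    have "real P = real k * (real n - real k)" by (rule P_real)
    also have "\<dots> \<le> real n * real n" using n_ge by (intro mult_mono) auto
    finally show ?thesis by (simp add: power2_eq_square)
  qed
  have num: "sqrt (2 * real P * real n^3) / sg^2 + (real n + 1) / sg + 4 / real n + 8 * (real n / sg) + 4 * (real n / sg)^3 / (real n / real P)
         \<le> 300 * sqrt (real n / real P)"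
    by (rule numeric) (use n2 Ppos Pn sg_pos sg_sq in auto)
  have "\<bar>std_cdf s k x - Phi x\<bar> \<le> 2 * (\<Sum>A\<in>KK. \<bar>1 - st.B A\<bar>) / real (card KK) + 8 * del + 4 * del^3 / lam"
    using sk1 unfolding std_cdf_eq N_def .
  also have "\<dots> \<le> 300 * sqrt (real n / real P)"
    using a num unfolding del_def lam_def by linarith
  finally show ?thesis .
qed

end

lemma bound_sk:
  assumes k: "0 < k" and sk: "2 * k < s"
  shows "\<bar>std_cdf s k x - Phi x\<bar> \<le> 300 * sqrt (real (s - k) / (real k * (real s - 2 * real k)))"
proof -
  interpret app s k by unfold_locales (use k sk in auto)
  have "real P = real k * (real s - 2 * real k)" unfolding P_real n_def using sk by (simp add: of_nat_diff)
  then show ?thesis using main_bound[of x] unfolding n_def by simp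
qed

lemma powr_ratio:
  fixes a b :: real
  assumes a: "a > 0" and b: "b > 0" and ba: "b \<le> a^2"
  shows "sqrt (a / b) \<le> a powr (5/2) / b powr (3/2)"
proof -
  have pa: "a powr (5/2) = a^2 * sqrt a"
  proof -
    have e1: "a powr (5/2) = a powr 2 * a powr (1/2)" by (simp add: powr_add[symmetric])
    have e2: "a powr 2 = a^2" using a by (simp add: powr_numeral)
    have e3: "a powr (1/2) = sqrt a" using a by (simp add: powr_half_sqrt)
    show ?thesis unfolding e1 e2 e3 ..
  qed
  have pb: "b powr (3/2) = b * sqrt b"
  proof -
    have "b * sqrt b = b powr 1 * b powr (1/2)" using b by (simp add: powr_half_sqrt)
    also have "\<dots> = b powr (1 + 1/2)" by (rule powr_add[symmetric])
    also have "(1 + 1/2 :: real) = 3/2" by simp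
    finally show ?thesis by simp
  qed
  have "sqrt (a / b) = 1 * (sqrt a / sqrt b)" by (simp add: real_sqrt_divide)
  also have "\<dots> \<le> (a^2 / b) * (sqrt a / sqrt b)"
    using ba b a by (intro mult_right_mono) auto
  also have "\<dots> = a powr (5/2) / b powr (3/2)" unfolding pa pb using a b by (simp add: field_simps)
  finally show ?thesis .
qed

lemma part1:
  "\<exists>K::real. \<forall>s k. 0 < s \<and> 0 < k \<and> 2 * k < s \<longrightarrow>
            (\<forall>x. \<bar>std_cdf s k x - Phi x\<bar>
                 \<le> 12 powr (3/2) * K * real (s - k) powr (5/2)
                    / (real k * (real s - 2 * real k)) powr (3/2))"
proof (intro exI[of _ 300] allI impI)
  fix s k x :: nat and y :: real
  assume "0 < s \<and> 0 < k \<and> 2 * k < s"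
  then have k: "0 < k" and sk: "2 * k < s" by auto
  define a where "a = real (s - k)"
  define b where "b = real k * (real s - 2 * real k)"
  have a0: "a > 0" unfolding a_def using sk by simp
  have b0: "b > 0" unfolding b_def using k sk by simp
  have ba: "b \<le> a^2"
  proof -
    have "real k \<le> a" "real s - 2 * real k \<le> a" unfolding a_def using sk by (auto simp: of_nat_diff)
    then have "b \<le> a * a" unfolding b_def using k sk by (intro mult_mono) auto
    then show ?thesis by (simp add: power2_eq_square)
  qed
  have r0: "0 \<le> a powr (5/2) / b powr (3/2)" by simp
  have c1: "1 \<le> (12::real) powr (3/2)" by (rule ge_one_powr_ge_zero) auto
  fix x :: real
  have "\<bar>std_cdf s k x - Phi x\<bar> \<le> 300 * sqrt (a / b)" using bound_sk[OF k sk] unfolding a_def b_def .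
  also have "\<dots> \<le> 300 * (a powr (5/2) / b powr (3/2))" using powr_ratio[OF a0 b0 ba] by simp
  also have "\<dots> \<le> 12 powr (3/2) * (300 * (a powr (5/2) / b powr (3/2)))"
  proof -
    have "1 * (300 * (a powr (5/2) / b powr (3/2))) \<le> 12 powr (3/2) * (300 * (a powr (5/2) / b powr (3/2)))"
      by (rule mult_right_mono[OF c1]) (use r0 in simp)
    then show ?thesis by simp
  qed
  finally show "\<bar>std_cdf s k x - Phi x\<bar> \<le> 12 powr (3/2) * 300 * real (s - k) powr (5/2)
                    / (real k * (real s - 2 * real k)) powr (3/2)"
    unfolding a_def b_def by (simp add: mult.assoc)
qed

lemma part2:
  "\<forall>(ss::nat \<Rightarrow> nat) (ks::nat \<Rightarrow> nat).
            filterlim ss at_top sequentially \<and>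
            filterlim (\<lambda>n. real (ks n) * real (ss n) powr (-2/3)) at_top sequentially \<and>
            filterlim (\<lambda>n. (real (ss n) - 2 * real (ks n)) * real (ss n) powr (-2/3)) at_top sequentially
            \<longrightarrow> (\<forall>x. (\<lambda>n. std_cdf (ss n) (ks n) x) \<longlonglongrightarrow> Phi x)"
proof (intro allI impI)
  fix ss ks :: "nat \<Rightarrow> nat" and x :: real
  assume H: "filterlim ss at_top sequentially \<and>
            filterlim (\<lambda>n. real (ks n) * real (ss n) powr (-2/3)) at_top sequentially \<and>
            filterlim (\<lambda>n. (real (ss n) - 2 * real (ks n)) * real (ss n) powr (-2/3)) at_top sequentially"
  then have hs: "filterlim ss at_top sequentially"
    and hk: "filterlim (\<lambda>n. real (ks n) * real (ss n) powr (-2/3)) at_top sequentially"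
    and hd: "filterlim (\<lambda>n. (real (ss n) - 2 * real (ks n)) * real (ss n) powr (-2/3)) at_top sequentially"
    by auto
  have ev_s: "eventually (\<lambda>n. ss n \<ge> 1) sequentially"
    using hs by (simp add: filterlim_at_top)
  have ev_k: "eventually (\<lambda>n. real (ks n) * real (ss n) powr (-2/3) > 0) sequentially"
    using hk by (simp add: filterlim_at_top_dense)
  have ev_d: "eventually (\<lambda>n. (real (ss n) - 2 * real (ks n)) * real (ss n) powr (-2/3) > 0) sequentially"
    using hd by (simp add: filterlim_at_top_dense)
  have pw_le1: "real (ss n) powr (-2/3) \<le> 1" if "ss n \<ge> 1" for n
  proof -
    have "real (ss n) powr (-2/3) \<le> real (ss n) powr 0" by (rule powr_mono) (use that in auto)
    then show ?thesis using that by simp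
  qed
  have kinf: "filterlim (\<lambda>n. real (ks n)) at_top sequentially"
  proof (rule filterlim_at_top_mono[OF hk])
    show "\<forall>\<^sub>F n in sequentially. real (ks n) * real (ss n) powr (-2/3) \<le> real (ks n)"
      using ev_s
    proof eventually_elim
      case (elim n)
      show ?case by (rule mult_right_le_one_le) (use pw_le1[OF elim] in auto)
    qed
  qed
  have dinf: "filterlim (\<lambda>n. real (ss n) - 2 * real (ks n)) at_top sequentially"
  proof (rule filterlim_at_top_mono[OF hd])
    show "\<forall>\<^sub>F n in sequentially. (real (ss n) - 2 * real (ks n)) * real (ss n) powr (-2/3) \<le> real (ss n) - 2 * real (ks n)"
      using ev_s ev_d
    proof eventually_elim
      case (elim n)
      have p: "real (ss n) powr (-2/3) > 0" using elim(1) by simp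
      then have "real (ss n) - 2 * real (ks n) > 0" using elim(2) by (simp add: zero_less_mult_iff)
      then show ?case using pw_le1[OF elim(1)] by (intro mult_right_le_one_le) (use p in auto)
    qed
  qed
  have lim0: "(\<lambda>n. 300 * sqrt (inverse (real (ks n)) + inverse (real (ss n) - 2 * real (ks n)))) \<longlonglongrightarrow> 300 * sqrt (0 + 0)"
    by (intro tendsto_intros tendsto_inverse_0_at_top kinf dinf)
  have ev_b: "eventually (\<lambda>n. norm (std_cdf (ss n) (ks n) x - Phi x) \<le> 300 * sqrt (inverse (real (ks n)) + inverse (real (ss n) - 2 * real (ks n)))) sequentially"
    using ev_s ev_k ev_d
  proof eventually_elim
    case (elim n)
    have p: "real (ss n) powr (-2/3) > 0" using elim(1) by simp
    then have k0: "0 < ks n" using elim(2) by (simp add: zero_less_mult_iff)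
    have d0: "real (ss n) - 2 * real (ks n) > 0" using elim(3) p by (simp add: zero_less_mult_iff)
    then have sk: "2 * ks n < ss n" by linarith
    have "real (ss n - ks n) / (real (ks n) * (real (ss n) - 2 * real (ks n)))
        = inverse (real (ks n)) + inverse (real (ss n) - 2 * real (ks n))"
      using k0 d0 sk by (simp add: of_nat_diff field_simps)
    then show ?case using bound_sk[OF k0 sk, of x] by simp
  qed
  have "(\<lambda>n. std_cdf (ss n) (ks n) x - Phi x) \<longlonglongrightarrow> 0"
    by (rule Lim_null_comparison[OF ev_b]) (use lim0 in simp)
  then show "(\<lambda>n. std_cdf (ss n) (ks n) x) \<longlonglongrightarrow> Phi x"
    by (simp add: LIM_zero_iff)
qed

theorem corollary3:
  shows "(\<exists>K::real. \<forall>s k. 0 < s \<and> 0 < k \<and> 2 * k < s \<longrightarrow>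
            (\<forall>x. \<bar>std_cdf s k x - Phi x\<bar>
                 \<le> 12 powr (3/2) * K * real (s - k) powr (5/2)
                    / (real k * (real s - 2 * real k)) powr (3/2)))
       \<and> (\<forall>(ss::nat \<Rightarrow> nat) (ks::nat \<Rightarrow> nat).
            filterlim ss at_top sequentially \<and>
            filterlim (\<lambda>n. real (ks n) * real (ss n) powr (-2/3)) at_top sequentially \<and>
            filterlim (\<lambda>n. (real (ss n) - 2 * real (ks n)) * real (ss n) powr (-2/3)) at_top sequentially
            \<longrightarrow> (\<forall>x. (\<lambda>n. std_cdf (ss n) (ks n) x) \<longlonglongrightarrow> Phi x))"
  using part1 part2 by blast

end
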